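(* Let $\mathbb{X},\mathbb{Y}$ be finite-dimensional real Hilbert spaces, $f:\mathbb{X}\to(-\infty,\infty]$ and $g:\mathbb{Y}\to(-\infty,\infty]$ proper, convex and lower semicontinuous, $K:\mathbb{X}\to\mathbb{Y}$ linear, and $h:\mathbb{X}\to\mathbb{R}$ convex and differentiable with $\bar L$-Lipschitz gradient. Assume (A1) below holds and that $g^*$ is strongly convex with modulus $\gamma_{g^*}>0$ and $h$ is strongly convex with modulus $\gamma_h>0$. Let $\{(z_n,x_n,w_n,y_n,\tau_n)\}$ be generated by the P-GRPDA algorithm described in the context, and suppose $\{(x_n,y_n)\}$ converges to the unique primal-dual solution $(\bar x,\bar y)$. Then there exist constants $V_1,V_2,Z>0$, a scalar $\zeta\in(0,1)$ and a natural number $n_4$ such that for all $n\ge n_4$, $$\|\bar x-z_{n+2}\|^2\le Z\zeta^n,\qquad\|\bar y-y_n\|^2\le V_1\zeta^n,\qquad\|x_n-x_{n+1}\|^2\le V_2\zeta^n,$$ and thus $\{(x_n,y_n)\}$ converges R-linearly to $(\bar x,\bar y)$.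
   Context: $\phi=\frac{1+\sqrt5}{2}$; $K^*$ adjoint of $K$; $g^*$ Fenchel conjugate of $g$; $\operatorname{prox}_{\lambda f}(x)=\arg\min_{u}\{f(u)+\frac{1}{2\lambda}\|u-x\|^2\}$. (A1): the saddle point problem $\min_{x}\max_{y}\mathbb{L}(x,y):=f(x)+h(x)+\langle Kx,y\rangle-g^*(y)$ has a nonempty solution set, and $0\in\operatorname{ri}(K(\operatorname{dom}f)-\operatorname{dom}g)$ (ri = relative interior). (The paper also assumes the proximal maps of $f,g$ are efficiently computable.) A primal-dual solution is a saddle point $(\bar x,\bar y)$ of $\mathbb{L}$. Strong convexity: $h(y)-h(z)\ge\langle\nabla h(z),y-z\rangle+\frac{\gamma_h}{2}\|y-z\|^2$ for all $y,z$; $g^*(y)-g^*(z)\ge\langle u,y-z\rangle+\frac{\gamma_{g^*}}{2}\|y-z\|^2$ for all $y,z$ and all $u\in\partial g^*(z)$. A sequence $v_n$ converges R-linearly to $v$ if $\|v_n-v\|\le M\epsilon_n$ for all large $n$ with some $M>0$ and some sequence $\epsilon_n$ converging Q-linearly to $0$ (i.e. $|\epsilon_{n+1}|\le q|\epsilon_n|$ for large $n$, some $q\in(0,1)$). P-GRPDA: choose $x_0\in\mathbb{X}$, $y_0\in\mathbb{Y}$, set $z_0=x_0$, choose $\beta>0$, $\psi\in(1,\phi]$, $0<2\mu'<\mu<\psi/2$, $\tau_0>0$. For $n=1,2,\dots$: $z_n=\frac{\psi-1}{\psi}x_{n-1}+\frac1\psi z_{n-1}$; $x_n=\operatorname{prox}_{\tau_{n-1}f}\big(z_n-\tau_{n-1}K^*y_{n-1}-\tau_{n-1}\nabla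 h(x_{n-1})\big)$; $\tau_n=\min\left\{\tau_{n-1},\ \frac{\mu\|x_n-x_{n-1}\|}{\sqrt\beta\|Kx_n-Kx_{n-1}\|},\ \frac{\mu'\|x_n-x_{n-1}\|}{\|\nabla h(x_n)-\nabla h(x_{n-1})\|}\right\}$, $\sigma_n=\beta\tau_n$; $w_n=\operatorname{prox}_{\frac{1}{\sigma_n}g}\big(\frac{y_{n-1}}{\sigma_n}+Kx_n\big)$; $y_n=y_{n-1}+\sigma_n(Kx_n-w_n)$. Conventions in the $\tau_n$ update: $1/0=\infty$ (a term with zero denominator and nonzero numerator is ignored) and $0/0=\infty$ (so $\tau_n=\tau_{n-1}$ if $x_n=x_{n-1}$). *)

theory Defs
  imports "HOL-Analysis.Analysis"
begin

text \<open>Extended-real valued functions \<open>'a \<Rightarrow> ereal\<close> model functions into (-inf, +inf].\<close>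

definition edom :: "('a \<Rightarrow> ereal) \<Rightarrow> 'a set" where
  "edom f = {x. f x < \<infinity>}"

definition proper_fun :: "('a \<Rightarrow> ereal) \<Rightarrow> bool" where
  "proper_fun f \<longleftrightarrow> (\<forall>x. f x \<noteq> -\<infinity>) \<and> (\<exists>x. f x \<noteq> \<infinity>)"

definition convex_efun :: "('a::real_vector \<Rightarrow> ereal) \<Rightarrow> bool" where
  "convex_efun f \<longleftrightarrow> convex {(x, r::real). f x \<le> ereal r}"

definition lsc_efun :: "('a::topological_space \<Rightarrow> ereal) \<Rightarrow> bool" where
  "lsc_efun f \<longleftrightarrow> (\<forall>c::real. closed {x. f x \<le> ereal c})"

definition fenchel_conj :: "('a::real_inner \<Rightarrow> ereal) \<Rightarrow> 'a \<Rightarrow> ereal" where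
  "fenchel_conj g y = (SUP x. ereal (inner x y) - g x)"

definition subdiff :: "('a::real_inner \<Rightarrow> ereal) \<Rightarrow> 'a \<Rightarrow> 'a set" where
  "subdiff p z = {u. \<bar>p z\<bar> \<noteq> \<infinity> \<and> (\<forall>y. p z + ereal (inner u (y - z)) \<le> p y)}"

definition prox :: "real \<Rightarrow> ('a::real_normed_vector \<Rightarrow> ereal) \<Rightarrow> 'a \<Rightarrow> 'a" where
  "prox lam f x = (SOME u. \<forall>v. f u + ereal (norm (u - x)^2 / (2 * lam))
                                 \<le> f v + ereal (norm (v - x)^2 / (2 * lam)))"

definition saddle_L ::
  "('x::real_inner \<Rightarrow> ereal) \<Rightarrow> ('x \<Rightarrow> real) \<Rightarrow> ('x \<Rightarrow> 'y::real_inner) \<Rightarrow> ('y \<Rightarrow> ereal)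
     \<Rightarrow> 'x \<Rightarrow> 'y \<Rightarrow> ereal" where
  "saddle_L f h K g x y = f x + ereal (h x) + ereal (inner (K x) y) - fenchel_conj g y"

definition is_saddle_point ::
  "('x::real_inner \<Rightarrow> ereal) \<Rightarrow> ('x \<Rightarrow> real) \<Rightarrow> ('x \<Rightarrow> 'y::real_inner) \<Rightarrow> ('y \<Rightarrow> ereal)
     \<Rightarrow> 'x \<Rightarrow> 'y \<Rightarrow> bool" where
  "is_saddle_point f h K g xb yb \<longleftrightarrow>
     (\<forall>x y. saddle_L f h K g xb y \<le> saddle_L f h K g xb yb \<and>
            saddle_L f h K g xb yb \<le> saddle_L f h K g x yb)"

definition strongly_convex_grad :: "('a::real_inner \<Rightarrow> real) \<Rightarrow> ('a \<Rightarrow> 'a) \<Rightarrow> real \<Rightarrow> bool" where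
  "strongly_convex_grad h dh gam \<longleftrightarrow>
     (\<forall>y z. h y - h z \<ge> inner (dh z) (y - z) + gam / 2 * norm (y - z)^2)"

definition strongly_convex_efun :: "('a::real_inner \<Rightarrow> ereal) \<Rightarrow> real \<Rightarrow> bool" where
  "strongly_convex_efun p gam \<longleftrightarrow>
     (\<forall>y z. \<forall>u \<in> subdiff p z. p z + ereal (inner u (y - z) + gam / 2 * norm (y - z)^2) \<le> p y)"

definition Q_linear_zero :: "(nat \<Rightarrow> real) \<Rightarrow> bool" where
  "Q_linear_zero e \<longleftrightarrow> e \<longlonglongrightarrow> 0 \<and>
     (\<exists>q. 0 < q \<and> q < 1 \<and> (\<exists>N. \<forall>n\<ge>N. \<bar>e (Suc n)\<bar> \<le> q * \<bar>e n\<bar>))"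

definition R_linear_conv :: "(nat \<Rightarrow> 'a::real_normed_vector) \<Rightarrow> 'a \<Rightarrow> bool" where
  "R_linear_conv v l \<longleftrightarrow>
     (\<exists>M e. M > 0 \<and> Q_linear_zero e \<and> (\<exists>N. \<forall>n\<ge>N. norm (v n - l) \<le> M * e n))"

definition golden :: real where "golden = (1 + sqrt 5) / 2"

text \<open>Step size rule: minimum of \<open>\<tau>_{n-1}\<close> and the two ratios, where a ratio with
  zero denominator is ignored (conventions 1/0 = 0/0 = \<infinity>).\<close>
definition pgrpda_step ::
  "('x::real_normed_vector \<Rightarrow> 'y::real_normed_vector) \<Rightarrow> ('x \<Rightarrow> 'x) \<Rightarrow> real \<Rightarrow> real \<Rightarrow> real
     \<Rightarrow> real \<Rightarrow> 'x \<Rightarrow> 'x \<Rightarrow> real" where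
  "pgrpda_step K dh beta mu mu' tau_prev xn xp =
     Min ({tau_prev}
          \<union> {mu * norm (xn - xp) / (sqrt beta * norm (K xn - K xp)) | _::unit. K xn - K xp \<noteq> 0}
          \<union> {mu' * norm (xn - xp) / norm (dh xn - dh xp) | _::unit. dh xn - dh xp \<noteq> 0})"

definition is_pgrpda ::
  "('x::euclidean_space \<Rightarrow> ereal) \<Rightarrow> ('x \<Rightarrow> 'x) \<Rightarrow> ('x \<Rightarrow> 'y::euclidean_space) \<Rightarrow> ('y \<Rightarrow> ereal)
   \<Rightarrow> real \<Rightarrow> real \<Rightarrow> real \<Rightarrow> real
   \<Rightarrow> (nat \<Rightarrow> 'x) \<Rightarrow> (nat \<Rightarrow> 'x) \<Rightarrow> (nat \<Rightarrow> 'y) \<Rightarrow> (nat \<Rightarrow> 'y) \<Rightarrow> (nat \<Rightarrow> real) \<Rightarrow> bool" where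
  "is_pgrpda f dh K g beta psi mu mu' z x w y tau \<longleftrightarrow>
     beta > 0 \<and> 1 < psi \<and> psi \<le> golden \<and> 0 < 2 * mu' \<and> 2 * mu' < mu \<and> mu < psi / 2 \<and>
     tau 0 > 0 \<and> z 0 = x 0 \<and>
     (\<forall>n\<ge>1.
        z n = ((psi - 1) / psi) *\<^sub>R x (n - 1) + (1 / psi) *\<^sub>R z (n - 1) \<and>
        x n = prox (tau (n - 1)) f
                (z n - tau (n - 1) *\<^sub>R adjoint K (y (n - 1)) - tau (n - 1) *\<^sub>R dh (x (n - 1))) \<and>
        tau n = pgrpda_step K dh beta mu mu' (tau (n - 1)) (x n) (x (n - 1)) \<and>
        w n = prox (1 / (beta * tau n)) g ((1 / (beta * tau n)) *\<^sub>R y (n - 1) + K (x n)) \<and>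
        y n = y (n - 1) + (beta * tau n) *\<^sub>R (K (x n) - w n))"

end

theory Submission
  imports Defs
begin


lemma convex_efun_ineq:
  fixes f :: "'a::real_vector \<Rightarrow> ereal"
  assumes "convex_efun f" "f x \<le> ereal a" "f y \<le> ereal b" "0 \<le> t" "t \<le> 1"
  shows "f ((1 - t) *\<^sub>R x + t *\<^sub>R y) \<le> ereal ((1 - t) * a + t * b)"
proof -
  have "(x, a) \<in> {(x, r::real). f x \<le> ereal r}" "(y, b) \<in> {(x, r::real). f x \<le> ereal r}"
    using assms by auto
  then have "(1 - t) *\<^sub>R (x, a) + t *\<^sub>R (y, b) \<in> {(x, r::real). f x \<le> ereal r}"
    using assms(1,4,5) unfolding convex_efun_def convex_def by (metis diff_add_cancel diff_ge_0_iff_ge)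
  then show ?thesis by simp
qed

lemma epi_closed:
  fixes f :: "'a::metric_space \<Rightarrow> ereal"
  assumes "lsc_efun f"
  shows "closed {(x, r::real). f x \<le> ereal r}"
unfolding closed_sequential_limits
proof (intro allI impI, elim conjE)
  fix s :: "nat \<Rightarrow> 'a \<times> real" and l :: "'a \<times> real"
  assume s: "\<forall>n. s n \<in> {(x, r). f x \<le> ereal r}" and lim: "s \<longlonglongrightarrow> l"
  define x where "x = fst l"
  define r where "r = snd l"
  have l: "l = (x, r)" by (simp add: x_def r_def)
  have fx: "(fst \<circ> s) \<longlonglongrightarrow> x" and sr: "(snd \<circ> s) \<longlonglongrightarrow> r"
    using tendsto_fst[OF lim] tendsto_snd[OF lim] l by (auto simp: o_def)
  have "f x \<le> ereal (r + e)" if "e > 0" for e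
  proof -
    have ev: "eventually (\<lambda>n. snd (s n) < r + e) sequentially"
      using order_tendstoD(2)[OF sr, of "r + e"] that by (simp add: o_def)
    have "eventually (\<lambda>n. (fst \<circ> s) n \<in> {x. f x \<le> ereal (r + e)}) sequentially"
    proof (rule eventually_mono[OF ev])
      fix n assume "snd (s n) < r + e"
      moreover have "f (fst (s n)) \<le> ereal (snd (s n))" using s[rule_format, of n]
        by (cases "s n") auto
      ultimately show "(fst \<circ> s) n \<in> {x. f x \<le> ereal (r + e)}"
        by (simp add: o_def) (meson ereal_less_eq(3) less_imp_le order_trans)
    qed
    from Lim_in_closed_set[OF _ this _ fx] assms show ?thesis
      unfolding lsc_efun_def by auto
  qed
  then have "f x \<le> ereal r"
  proof (cases "f x")
    case (real c)
    then have "\<And>e. e > 0 \<Longrightarrow> c \<le> r + e" using \<open>\<And>e. e > 0 \<Longrightarrow> f x \<le> ereal (r + e)\<close> by force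
    then have "c \<le> r" by (meson field_le_epsilon)
    then show ?thesis using real by simp
  next
    case PInf
    then show ?thesis using \<open>\<And>e. e > 0 \<Longrightarrow> f x \<le> ereal (r + e)\<close>[of 1] by simp
  qed simp
  then show "l \<in> {(x, r). f x \<le> ereal r}" using l by simp
qed

lemma affine_minorant:
  fixes f :: "'a::euclidean_space \<Rightarrow> ereal"
  assumes "proper_fun f" "convex_efun f" "lsc_efun f"
  shows "\<exists>a b. \<forall>x. ereal (inner a x + b) \<le> f x"
proof -
  obtain x0 where x0: "f x0 \<noteq> \<infinity>" using assms(1) unfolding proper_fun_def by blast
  then obtain c where c: "f x0 = ereal c" using assms(1) unfolding proper_fun_def
    by (cases "f x0") auto
  let ?S = "{(x, r::real). f x \<le> ereal r}"
  have cv: "convex ?S" using assms(2) unfolding convex_efun_def .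
  have cl: "closed ?S" using epi_closed[OF assms(3)] .
  have nz: "(x0, c - 1) \<notin> ?S" using c by simp
  obtain A b where Ab: "inner A (x0, c - 1) < b" "\<forall>z\<in>?S. b < inner A z"
    using separating_hyperplane_closed_point[OF cv cl nz] by blast
  obtain a a0 where A: "A = (a, a0)" by fastforce
  have in1: "inner a x0 + (c - 1) * a0 < b" using Ab(1) A by (simp add: inner_Pair mult.commute)
  have in2: "\<And>x r. f x \<le> ereal r \<Longrightarrow> b < inner a x + r * a0"
    using Ab(2) A by (auto simp: inner_Pair mult.commute)
  have "b < inner a x0 + c * a0" using in2[of x0 c] c by simp
  with in1 have a0: "a0 > 0" by (simp add: algebra_simps)
  have "ereal (inner (- a /\<^sub>R a0) x + b / a0) \<le> f x" for x
  proof (cases "f x")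
    case (real r)
    then have "b < inner a x + r * a0" using in2 by simp
    then have "b / a0 - inner a x / a0 < r" using a0 by (simp add: field_simps)
    then show ?thesis using real by (simp add: inner_minus_left divide_inverse mult.commute)
  next
    case MInf then show ?thesis using assms(1) unfolding proper_fun_def by blast
  qed simp
  then show ?thesis by blast
qed


lemma norm_add_scale_sq:
  fixes a d :: "'a::real_inner"
  shows "norm (a + t *\<^sub>R d)^2 = norm a^2 + 2 * t * inner a d + t^2 * norm d^2"
  unfolding power2_norm_eq_inner by (simp add: inner_add_left inner_add_right inner_commute algebra_simps power2_eq_square)

lemma prox_exists:
  fixes f :: "'a::euclidean_space \<Rightarrow> ereal"
  assumes fp: "proper_fun f" "convex_efun f" "lsc_efun f" and lam: "lam > 0"
  shows "\<exists>u. \<forall>v. f u + ereal (norm (u - x)^2 / (2 * lam)) \<le> f v + ereal (norm (v - x)^2 / (2 * lam))"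
proof -
  define q where "q u = norm (u - x)^2 / (2 * lam)" for u
  obtain a b where ab: "\<And>u. ereal (inner a u + b) \<le> f u" using affine_minorant[OF fp] by blast
  obtain x0 where x0: "f x0 \<noteq> \<infinity>" using fp(1) unfolding proper_fun_def by blast
  then obtain c0 where c0: "f x0 = ereal c0" using fp(1) unfolding proper_fun_def
    by (cases "f x0") auto
  define C where "C = c0 + q x0"
  define T where "T = {(u, r::real). f u \<le> ereal r} \<inter> {p. snd p + q (fst p) \<le> C}"
  have contq: "continuous_on UNIV q" using lam unfolding q_def by (intro continuous_intros) auto
  have cl: "closed T" unfolding T_def
  proof (intro closed_Int epi_closed[OF fp(3)])
    show "closed {p. snd p + q (fst p) \<le> C}"
      by (intro closed_Collect_le continuous_intros continuous_on_compose2[OF contq]) auto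
  qed
  define D where "D = C - b - inner a x"
  define R where "R = sqrt (4 * lam * (\<bar>D\<bar> + lam * norm a^2))"
  have Tsub: "T \<subseteq> cball x R \<times> {- norm a * (R + norm x) + b .. C}"
  proof
    fix p assume "p \<in> T"
    then obtain u r where p: "p = (u, r)" and fu: "f u \<le> ereal r" and rq: "r + q u \<le> C"
      unfolding T_def by auto
    have aub: "inner a u + b \<le> r" using order_trans[OF ab fu] by simp
    define d where "d = norm (u - x)"
    have "inner a u = inner a (u - x) + inner a x" by (simp add: inner_diff_right)
    moreover have "inner a (u - x) \<ge> - (norm a * d)" unfolding d_def
      using Cauchy_Schwarz_ineq2[of a "u - x"] by linarith
    ultimately have au: "inner a u \<ge> - (norm a * d) + inner a x" by linarith
    have "norm a * d \<le> d^2 / (4 * lam) + lam * norm a^2"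
    proof -
      have "0 \<le> (d - 2 * lam * norm a)^2 / (4 * lam)" using lam by simp
      also have "\<dots> = d^2 / (4 * lam) + lam * norm a^2 - norm a * d"
        using lam by (simp add: power2_eq_square field_simps)
      finally show ?thesis by simp
    qed
    moreover have "q u = d^2 / (2 * lam)" unfolding q_def d_def by simp
    ultimately have "d^2 / (2 * lam) - d^2 / (4 * lam) \<le> D + lam * norm a^2"
      using aub rq au unfolding D_def by linarith
    moreover have "d^2 / (2 * lam) - d^2 / (4 * lam) = d^2 / (4 * lam)" using lam by (simp add: field_simps)
    ultimately have "d^2 \<le> 4 * lam * (D + lam * norm a^2)" using lam by (simp add: field_simps)
    then have "d^2 \<le> R^2" unfolding R_def using lam
      by (smt (verit, best) abs_ge_self mult_left_mono real_sqrt_pow2 zero_le_power2 mult_nonneg_nonneg)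
    then have dR: "d \<le> R" by (rule power2_le_imp_le) (use lam in \<open>simp add: R_def\<close>)
    then have "u \<in> cball x R" unfolding d_def by (simp add: dist_norm norm_minus_commute)
    moreover have "r \<le> C" using rq unfolding q_def by (smt (verit) divide_nonneg_pos lam zero_le_power2)
    moreover have "- norm a * (R + norm x) + b \<le> r"
    proof -
      have "norm u \<le> R + norm x" using dR unfolding d_def by (smt (verit) norm_triangle_ineq2)
      then have "inner a u \<ge> - (norm a * (R + norm x))"
        using Cauchy_Schwarz_ineq2[of a u] norm_ge_zero[of a]
        by (smt (verit) mult_left_mono norm_ge_zero)
      then show ?thesis using aub by linarith
    qed
    ultimately show "p \<in> cball x R \<times> {- norm a * (R + norm x) + b .. C}" using p by auto
  qed
  have "bounded T" by (rule bounded_subset[OF bounded_Times[OF bounded_cball bounded_closed_interval] Tsub])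
  then have cT: "compact T" using cl by (simp add: compact_eq_bounded_closed)
  have neT: "(x0, c0) \<in> T" unfolding T_def C_def using c0 by simp
  have contT: "continuous_on T (\<lambda>p. snd p + q (fst p))"
    by (intro continuous_intros continuous_on_compose2[OF contq]) auto
  obtain p where pT: "p \<in> T" and pmin: "\<And>p'. p' \<in> T \<Longrightarrow> snd p + q (fst p) \<le> snd p' + q (fst p')"
    using continuous_attains_inf[OF cT _ contT] neT by blast
  obtain u r where p: "p = (u, r)" by fastforce
  have fu: "f u \<le> ereal r" and rq: "r + q u \<le> C" using pT p unfolding T_def by auto
  have "f u + ereal (q u) \<le> f v + ereal (q v)" for v
  proof (cases "f v")
    case (real cv)
    show ?thesis
    proof (cases "cv + q v \<le> C")
      case True
      then have "(v, cv) \<in> T" unfolding T_def using real by simp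
      from pmin[OF this] p have "r + q u \<le> cv + q v" by simp
      then show ?thesis using fu real by (metis add_mono ereal_less_eq(3) order_trans plus_ereal.simps(1) order_refl)
    next
      case False
      then have "r + q u \<le> cv + q v" using rq by simp
      then show ?thesis using fu real by (metis add_mono ereal_less_eq(3) order_trans plus_ereal.simps(1) order_refl)
    qed
  next
    case MInf then show ?thesis using fp(1) unfolding proper_fun_def by blast
  qed simp
  then show ?thesis unfolding q_def by blast
qed


lemma le_eps_real:
  fixes A K :: real
  assumes "\<And>t. 0 < t \<Longrightarrow> t \<le> 1 \<Longrightarrow> A \<le> t * K" "K \<ge> 0"
  shows "A \<le> 0"
proof (rule ccontr)
  assume "\<not> A \<le> 0"
  then have A: "A > 0" by simp
  define t where "t = min 1 (A / (2 * (K + 1)))"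
  have t: "0 < t" "t \<le> 1" using A assms(2) unfolding t_def by auto
  have "t * K \<le> (A / (2 * (K + 1))) * K" unfolding t_def using assms(2)
    by (intro mult_right_mono) auto
  also have "\<dots> < A"
  proof -
    have "A * K \<ge> 0" using A assms(2) by simp
    then show ?thesis using A assms(2) by (simp add: field_simps) (smt (verit) mult_nonneg_nonneg)
  qed
  finally show False using assms(1)[OF t] by simp
qed

lemma prox_opt:
  fixes f :: "'a::euclidean_space \<Rightarrow> ereal"
  assumes fp: "proper_fun f" "convex_efun f" "lsc_efun f" and lam: "lam > 0"
    and u: "u = prox lam f x"
  shows "\<exists>c. f u = ereal c \<and> (\<forall>y. ereal (c + inner ((1 / lam) *\<^sub>R (x - u)) (y - u)) \<le> f y)"
proof -
  define q where "q u = norm (u - x)^2 / (2 * lam)" for u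
  have min: "\<And>v. f u + ereal (q u) \<le> f v + ereal (q v)"
    using someI_ex[OF prox_exists[OF fp lam, of x]] u unfolding prox_def q_def by blast
  obtain x0 where x0: "f x0 \<noteq> \<infinity>" using fp(1) unfolding proper_fun_def by blast
  then obtain c0 where c0: "f x0 = ereal c0" using fp(1) unfolding proper_fun_def
    by (cases "f x0") auto
  have "f u \<noteq> \<infinity>"
  proof
    assume "f u = \<infinity>"
    then show False using min[of x0] c0 by simp
  qed
  then obtain c where c: "f u = ereal c" using fp(1) unfolding proper_fun_def
    by (cases "f u") auto
  have "ereal (c + inner ((1 / lam) *\<^sub>R (x - u)) (y - u)) \<le> f y" for y
  proof (cases "f y")
    case (real cy)
    have "c - cy - inner (u - x) (y - u) / lam \<le> 0"
    proof (rule le_eps_real)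
      fix t :: real assume t: "0 < t" "t \<le> 1"
      define ut where "ut = (1 - t) *\<^sub>R u + t *\<^sub>R y"
      have fut: "f ut \<le> ereal ((1 - t) * c + t * cy)"
        unfolding ut_def using convex_efun_ineq[OF fp(2), of u c y cy t] c real t by simp
      have "ereal (c + q u) \<le> f ut + ereal (q ut)" using min[of ut] c by simp
      also have "\<dots> \<le> ereal ((1 - t) * c + t * cy) + ereal (q ut)" using fut by (rule add_right_mono)
      finally have ineq: "c + q u \<le> (1 - t) * c + t * cy + q ut" by simp
      have "ut - x = (u - x) + t *\<^sub>R (y - u)" unfolding ut_def by (simp add: algebra_simps)
      then have "q ut = (norm (u - x)^2 + 2 * t * inner (u - x) (y - u) + t^2 * norm (y - u)^2) / (2 * lam)"
        unfolding q_def by (metis norm_add_scale_sq)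
      then have "t * c \<le> t * cy + t * (inner (u - x) (y - u) / lam) + t * (t * (norm (y - u)^2 / (2 * lam)))"
        using ineq lam unfolding q_def by (simp add: field_simps power2_eq_square)
      then have "t * (c - cy - inner (u - x) (y - u) / lam) \<le> t * (t * (norm (y - u)^2 / (2 * lam)))"
        by (simp add: algebra_simps)
      then show "c - cy - inner (u - x) (y - u) / lam \<le> t * (norm (y - u)^2 / (2 * lam))"
        using t by (metis mult_le_cancel_left_pos)
    next
      show "0 \<le> norm (y - u)^2 / (2 * lam)" using lam by simp
    qed
    then have "c + inner ((1 / lam) *\<^sub>R (x - u)) (y - u) \<le> cy"
      by (simp add: inner_diff_left inner_diff_right algebra_simps divide_inverse)
    then show ?thesis using real by simp
  next
    case MInf then show ?thesis using fp(1) unfolding proper_fun_def by blast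
  qed simp
  then show ?thesis using c by blast
qed



lemma key_identity:
  fixes x0 x1 x2 xb z1 z2 d0 d1 db :: "'x::real_inner" and y0 y1 yb :: "'y::real_inner"
    and K :: "'x \<Rightarrow> 'y" and Ka :: "'y \<Rightarrow> 'x"
  assumes K: "linear K" and adj: "\<And>u v. inner (Ka u) v = inner u (K v)"
    and t0: "t0 \<noteq> 0" and t1: "t1 \<noteq> 0" and b: "beta \<noteq> 0"
  shows "inner ((1 / t1) *\<^sub>R (z2 - t1 *\<^sub>R Ka y1 - t1 *\<^sub>R d1 - x2)) (xb - x2)
       + inner ((1 / t0) *\<^sub>R (z1 - t0 *\<^sub>R Ka y0 - t0 *\<^sub>R d0 - x1)) (x2 - x1)
       + inner (- Ka yb - db) (x1 - xb)
       + inner (K x1 + (1 / (beta * t1)) *\<^sub>R (y0 - y1) - K xb) (yb - y1)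
     = inner (z2 - x2) (xb - x2) / t1 + inner (z1 - x1) (x2 - x1) / t0
       + inner (y1 - y0) (K (x2 - x1)) + inner (d1 - d0) (x2 - x1) + inner (d1 - db) (x1 - xb)
       + inner (y0 - y1) (yb - y1) / (beta * t1)"
proof -
  have e1: "(1 / t1) *\<^sub>R (z2 - t1 *\<^sub>R Ka y1 - t1 *\<^sub>R d1 - x2) = (1 / t1) *\<^sub>R (z2 - x2) - Ka y1 - d1"
    using t1 by (simp add: algebra_simps)
  have e0: "(1 / t0) *\<^sub>R (z1 - t0 *\<^sub>R Ka y0 - t0 *\<^sub>R d0 - x1) = (1 / t0) *\<^sub>R (z1 - x1) - Ka y0 - d0"
    using t0 by (simp add: algebra_simps)
  have kd: "\<And>a c. K (a - c) = K a - K c" using linear_diff[OF K] by blast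
  show ?thesis unfolding e1 e0
    by (simp add: inner_diff_left inner_diff_right inner_add_left inner_add_right adj kd
        inner_minus_left algebra_simps inner_commute[of "K _" y0] inner_commute[of "K _" y1] inner_commute[of "K _" yb])
       (simp add: add_divide_distrib diff_divide_distrib algebra_simps)
qed


lemma energy_arith:
  fixes t0 t1 t2 beta psi mu mu' delta gg gh P a1 a2 T Hx Hm Y nz3 nz2 nzx2 nx2b nzx1 d1 d2 dy ny0 ny1 nx1b :: real
  assumes pos: "t0 > 0" "t1 > 0" "t2 > 0" "beta > 0" "psi > 1" "psi^2 \<le> psi + 1"
    and main: "a1 / t1 + a2 / t0 + T + Hx + Hm + Y / (beta * t1) + gg * ny1 \<le> 0"
    and a1: "a1 = (nzx2 + nx2b - nz2) / 2"
    and a2: "a2 = psi * (nzx1 + d2 - nzx2) / 2"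
    and Y: "Y = (dy + ny1 - ny0) / 2"
    and conv: "nz3 = ((psi - 1) / psi) * nx2b + (1 / psi) * nz2 - ((psi - 1) / psi) * (1 / psi) * nzx2"
    and Tb: "T \<ge> - (mu / (2 * t2)) * (dy / beta + d2)"
    and Hxb: "Hx \<ge> - (mu' / (2 * t1)) * (d1 + d2)"
    and Hmb: "Hm \<ge> gh * nx1b"
    and nn: "nzx2 \<ge> 0" "dy \<ge> 0" "nzx1 \<ge> 0" "d2 \<ge> 0"
    and c1: "t1 \<le> t0" "t1 / t0 \<ge> 1 / 2"
    and c2: "(t1 / t0) * psi / 2 - mu * (t1 / t2) / 2 - mu' \<ge> delta"
    and c3: "1 - mu * (t1 / t2) \<ge> 0"
    and P: "P = psi / (2 * (psi - 1))"
  shows "P * nz3 + ny1 / (2 * beta) + mu' / 2 * d2 + delta * d2 + psi / 4 * nzx1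
           + t1 * gh * nx1b + t1 * gg * ny1
         \<le> P * nz2 + ny0 / (2 * beta) + mu' / 2 * d1"
proof -
  define rho where "rho = t1 / t0"
  define r where "r = t1 / t2"
  define M where "M = a1 / t1 + a2 / t0 + T + Hx + Hm + Y / (beta * t1) + gg * ny1"
  define X1 where "X1 = 1 / 2 + 1 / (2 * psi) - rho * psi / 2"
  define X2 where "X2 = rho * psi / 2 - psi / 4"
  define X3 where "X3 = rho * psi / 2 - mu * r / 2 - mu' - delta"
  define X4 where "X4 = (1 - mu * r) / (2 * beta)"
  have ps: "psi - 1 \<noteq> 0" "psi \<noteq> 0" using pos by auto
  have a1': "a1 = P * nz3 - P * nz2 + (1 / 2 + 1 / (2 * psi)) * nzx2"
  proof -
    define c where "c = (psi - 1) / psi"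
    have c0: "c \<noteq> 0" unfolding c_def using ps by simp
    have ic: "1 / psi = 1 - c" unfolding c_def using ps by (simp add: field_simps)
    have Pc: "P = 1 / (2 * c)" unfolding P c_def using ps by simp
    have cv: "nz3 = c * nx2b + (1 - c) * nz2 - c * (1 - c) * nzx2" using conv ic unfolding c_def by (metis mult.commute)
    have Pn: "P * nz3 = nx2b / 2 + (1 - c) / (2 * c) * nz2 - (1 - c) / 2 * nzx2"
      unfolding Pc cv using c0 by (simp add: field_simps)
    have h2: "1 / (2 * psi) = (1 - c) / 2" using ic by (metis divide_divide_eq_left' divide_inverse_commute inverse_eq_divide)
    show ?thesis unfolding a1 h2 Pn unfolding Pc using c0 by (simp add: field_simps)
  qed
  have iden: "(P * nz2 + ny0 / (2 * beta) + mu' / 2 * d1) - (P * nz3 + ny1 / (2 * beta) + mu' / 2 * d2 + delta * d2 + psi / 4 * nzx1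
           + t1 * gh * nx1b + t1 * gg * ny1)
      = - t1 * M + t1 * (T + (mu / (2 * t2)) * (dy / beta + d2)) + t1 * (Hx + (mu' / (2 * t1)) * (d1 + d2))
        + t1 * (Hm - gh * nx1b) + X1 * nzx2 + X2 * nzx1 + X3 * d2 + X4 * dy"
    unfolding M_def X1_def X2_def X3_def X4_def rho_def r_def a1' a2 Y using pos
    by (simp add: field_simps)
  have "rho \<le> 1" unfolding rho_def using c1 pos by simp
  have "X1 \<ge> 0"
  proof -
    have "rho * psi \<le> psi" using \<open>rho \<le> 1\<close> pos by simp
    moreover have "psi \<le> 1 + 1 / psi" using pos by (simp add: field_simps power2_eq_square)
    ultimately show ?thesis unfolding X1_def by simp
  qed
  have "X2 \<ge> 0" unfolding X2_def rho_def using c1 pos by (simp add: field_simps)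
  have "X3 \<ge> 0" unfolding X3_def rho_def r_def using c2 by simp
  have "X4 \<ge> 0" unfolding X4_def r_def using c3 pos by simp
  have "t1 * M \<le> 0" by (rule mult_nonneg_nonpos) (use pos main in \<open>auto simp: M_def\<close>)
  then have "-t1 * M \<ge> 0" by simp
  moreover have "t1 * (T + (mu / (2 * t2)) * (dy / beta + d2)) \<ge> 0" using Tb pos by simp
  moreover have "t1 * (Hx + (mu' / (2 * t1)) * (d1 + d2)) \<ge> 0" using Hxb pos by simp
  moreover have "t1 * (Hm - gh * nx1b) \<ge> 0" using Hmb pos by simp
  moreover have "X1 * nzx2 \<ge> 0" "X2 * nzx1 \<ge> 0" "X3 * d2 \<ge> 0" "X4 * dy \<ge> 0"
    using \<open>X1 \<ge> 0\<close> \<open>X2 \<ge> 0\<close> \<open>X3 \<ge> 0\<close> \<open>X4 \<ge> 0\<close> nn by simp_all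
  ultimately show ?thesis using iden by linarith
qed



lemma step_set_finite: "finite ({a::real} \<union> {r1 | _::unit. P1} \<union> {r2 | _::unit. P2})"
proof -
  have "{r1 | _::unit. P1} \<subseteq> {r1}" "{r2 | _::unit. P2} \<subseteq> {r2}" by auto
  then show ?thesis by (meson finite.emptyI finite.insertI finite_Un finite_subset)
qed

lemma step_le_prev: "pgrpda_step K dh beta mu mu' tp xn xp \<le> tp"
  unfolding pgrpda_step_def by (rule Min_le[OF step_set_finite]) simp

lemma step_K:
  assumes "beta > 0" "mu \<ge> 0"
  shows "sqrt beta * pgrpda_step K dh beta mu mu' tp xn xp * norm (K xn - K xp) \<le> mu * norm (xn - xp)"
proof (cases "K xn - K xp = 0")
  case True then show ?thesis using assms by simp
next
  case False
  have "pgrpda_step K dh beta mu mu' tp xn xp \<le> mu * norm (xn - xp) / (sqrt beta * norm (K xn - K xp))"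
    unfolding pgrpda_step_def by (rule Min_le[OF step_set_finite]) (use False in auto)
  moreover have "sqrt beta * norm (K xn - K xp) > 0" using False assms by simp
  ultimately have "pgrpda_step K dh beta mu mu' tp xn xp * (sqrt beta * norm (K xn - K xp)) \<le> mu * norm (xn - xp)"
    by (simp add: pos_le_divide_eq)
  then show ?thesis by (simp add: ac_simps)
qed

lemma step_dh:
  assumes "mu' \<ge> 0"
  shows "pgrpda_step K dh beta mu mu' tp xn xp * norm (dh xn - dh xp) \<le> mu' * norm (xn - xp)"
proof (cases "dh xn - dh xp = 0")
  case True then show ?thesis using assms by simp
next
  case False
  have "pgrpda_step K dh beta mu mu' tp xn xp \<le> mu' * norm (xn - xp) / norm (dh xn - dh xp)"
    unfolding pgrpda_step_def by (rule Min_le[OF step_set_finite]) (use False in auto)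
  moreover have "norm (dh xn - dh xp) > 0" using False by simp
  ultimately show ?thesis by (simp add: pos_le_divide_eq)
qed

lemma step_ge:
  assumes b: "beta > 0" "mu > 0" "mu' > 0" "B > 0" "L1 > 0"
    and KB: "norm (K xn - K xp) \<le> B * norm (xn - xp)"
    and dL: "norm (dh xn - dh xp) \<le> L1 * norm (xn - xp)"
  shows "min tp (min (mu / (sqrt beta * B)) (mu' / L1)) \<le> pgrpda_step K dh beta mu mu' tp xn xp"
proof -
  define m where "m = min tp (min (mu / (sqrt beta * B)) (mu' / L1))"
  define S where "S = {tp} \<union> {mu * norm (xn - xp) / (sqrt beta * norm (K xn - K xp)) | _::unit. K xn - K xp \<noteq> 0}
          \<union> {mu' * norm (xn - xp) / norm (dh xn - dh xp) | _::unit. dh xn - dh xp \<noteq> 0}"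
  have fin: "finite S" unfolding S_def by (rule step_set_finite)
  have ne: "S \<noteq> {}" unfolding S_def by blast
  have K1: "m \<le> mu * norm (xn - xp) / (sqrt beta * norm (K xn - K xp))" if nz: "K xn - K xp \<noteq> 0"
  proof -
    have nK: "norm (K xn - K xp) > 0" using nz by simp
    have "sqrt beta * norm (K xn - K xp) \<le> sqrt beta * (B * norm (xn - xp))" using KB b
      by (intro mult_left_mono) auto
    then have "mu * (sqrt beta * norm (K xn - K xp)) \<le> mu * (sqrt beta * (B * norm (xn - xp)))"
      using b by (intro mult_left_mono) auto
    then have "mu / (sqrt beta * B) \<le> mu * norm (xn - xp) / (sqrt beta * norm (K xn - K xp))"
      using b nK by (simp add: divide_le_eq le_divide_eq ac_simps)
    then show ?thesis unfolding m_def by linarith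
  qed
  have D1: "m \<le> mu' * norm (xn - xp) / norm (dh xn - dh xp)" if nz: "dh xn - dh xp \<noteq> 0"
  proof -
    have nD: "norm (dh xn - dh xp) > 0" using nz by simp
    have "mu' * norm (dh xn - dh xp) \<le> mu' * (L1 * norm (xn - xp))" using dL b
      by (intro mult_left_mono) auto
    then have "mu' / L1 \<le> mu' * norm (xn - xp) / norm (dh xn - dh xp)"
      using b nD by (simp add: divide_le_eq le_divide_eq ac_simps)
    then show ?thesis unfolding m_def by linarith
  qed
  have "\<forall>a\<in>S. m \<le> a"
  proof
    fix a assume "a \<in> S"
    then consider "a = tp" | "K xn - K xp \<noteq> 0" "a = mu * norm (xn - xp) / (sqrt beta * norm (K xn - K xp))"
      | "dh xn - dh xp \<noteq> 0" "a = mu' * norm (xn - xp) / norm (dh xn - dh xp)"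
      unfolding S_def by blast
    then show "m \<le> a"
    proof cases
      case 1 then show ?thesis unfolding m_def by simp
    next
      case 2 then show ?thesis using K1 by simp
    next
      case 3 then show ?thesis using D1 by simp
    qed
  qed
  then have "m \<le> Min S" using Min_ge_iff[OF fin ne] by blast
  then show ?thesis unfolding m_def S_def pgrpda_step_def .
qed



lemma conj_from_subgrad:
  fixes g :: "'a::real_inner \<Rightarrow> ereal"
  assumes gw: "g w = ereal cg" and sg: "\<And>u. ereal (cg + inner yv (u - w)) \<le> g u"
  shows "fenchel_conj g yv = ereal (inner w yv - cg)"
    and "\<And>y'. ereal (inner w y' - cg) \<le> fenchel_conj g y'"
proof -
  show low: "ereal (inner w y' - cg) \<le> fenchel_conj g y'" for y'
  proof -
    have "ereal (inner w y') - g w \<le> fenchel_conj g y'"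
      unfolding fenchel_conj_def by (rule SUP_upper) simp
    then show ?thesis using gw by simp
  qed
  have "fenchel_conj g yv \<le> ereal (inner w yv - cg)"
    unfolding fenchel_conj_def
  proof (rule SUP_least)
    fix u
    show "ereal (inner u yv) - g u \<le> ereal (inner w yv - cg)"
    proof (cases "g u")
      case (real gu)
      have "cg + inner yv (u - w) \<le> gu" using sg[of u] real by simp
      then have "inner u yv - gu \<le> inner w yv - cg" by (simp add: inner_diff_right inner_commute)
      then show ?thesis using real by simp
    next
      case MInf then show ?thesis using sg[of u] by simp
    qed simp
  qed
  then show "fenchel_conj g yv = ereal (inner w yv - cg)" using low[of yv] by (rule antisym)
qed

lemma golden_sq:
  assumes "1 < psi" "psi \<le> golden"
  shows "psi^2 \<le> psi + 1"
proof -
  define g' where "g' = (1 - sqrt 5) / 2"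
  have s5: "sqrt 5 * sqrt 5 = 5" by simp
  have "psi^2 - psi - 1 = (psi - golden) * (psi - g')"
    unfolding golden_def g'_def by (simp add: algebra_simps power2_eq_square s5 field_simps)
  moreover have "psi - golden \<le> 0" using assms by simp
  moreover have "psi - g' > 0"
  proof -
    have "sqrt 5 > 1" by simp
    then have "(1 - sqrt 5) / 2 < 0" by simp
    then show ?thesis using assms unfolding g'_def by linarith
  qed
  ultimately have "psi^2 - psi - 1 \<le> 0" by (simp add: mult_nonpos_nonneg)
  then show ?thesis by simp
qed

locale pg =
  fixes f :: "'x::euclidean_space \<Rightarrow> ereal" and g :: "'y::euclidean_space \<Rightarrow> ereal"
    and K :: "'x \<Rightarrow> 'y" and h :: "'x \<Rightarrow> real" and dh :: "'x \<Rightarrow> 'x"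
    and Lbar gam_h gam_g beta psi mu mu' :: real
    and z x :: "nat \<Rightarrow> 'x" and w y :: "nat \<Rightarrow> 'y" and tau :: "nat \<Rightarrow> real"
    and xb :: 'x and yb :: 'y
  assumes f_pcl: "proper_fun f" "convex_efun f" "lsc_efun f"
    and g_pcl: "proper_fun g" "convex_efun g" "lsc_efun g"
    and K_lin: "linear K"
    and h_lip: "Lbar-lipschitz_on UNIV dh"
    and g_sc: "gam_g > 0" "strongly_convex_efun (fenchel_conj g) gam_g"
    and h_sc: "gam_h > 0" "strongly_convex_grad h dh gam_h"
    and alg: "is_pgrpda f dh K g beta psi mu mu' z x w y tau"
    and sol: "is_saddle_point f h K g xb yb"
begin

abbreviation "G \<equiv> fenchel_conj g"

lemma params: "beta > 0" "1 < psi" "psi \<le> golden" "0 < mu'" "2 * mu' < mu" "mu < psi / 2" "tau 0 > 0"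
  using alg unfolding is_pgrpda_def by auto

lemma psi_sq: "psi^2 \<le> psi + 1" using golden_sq params by auto

lemma recs:
  "z (Suc n) = ((psi - 1) / psi) *\<^sub>R x n + (1 / psi) *\<^sub>R z n"
  "x (Suc n) = prox (tau n) f (z (Suc n) - tau n *\<^sub>R adjoint K (y n) - tau n *\<^sub>R dh (x n))"
  "tau (Suc n) = pgrpda_step K dh beta mu mu' (tau n) (x (Suc n)) (x n)"
  "w (Suc n) = prox (1 / (beta * tau (Suc n))) g ((1 / (beta * tau (Suc n))) *\<^sub>R y n + K (x (Suc n)))"
  "y (Suc n) = y n + (beta * tau (Suc n)) *\<^sub>R (K (x (Suc n)) - w (Suc n))"
  using alg unfolding is_pgrpda_def by (auto dest!: spec[of _ "Suc n"])

lemma adj: "inner (adjoint K u) v = inner u (K v)"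
  using adjoint_works[OF K_lin, of v u] by (simp add: inner_commute)

lemma Kdiff: "K (a - b) = K a - K b" using linear_diff[OF K_lin] by blast

definition "KB = (SOME B. B > 0 \<and> (\<forall>v. norm (K v) \<le> B * norm v))"

lemma KB: "KB > 0" "norm (K v) \<le> KB * norm v"
proof -
  obtain B where "B > 0" "\<And>v. norm (K v) \<le> B * norm v" using linear_bounded_pos[OF K_lin] by blast
  then have "\<exists>B. B > 0 \<and> (\<forall>v. norm (K v) \<le> B * norm v)" by blast
  from someI_ex[OF this] show "KB > 0" "norm (K v) \<le> KB * norm v" unfolding KB_def by auto
qed

definition "L1 = max Lbar 1"

lemma L1: "L1 > 0" "norm (dh a - dh b) \<le> L1 * norm (a - b)"
proof -
  show "L1 > 0" unfolding L1_def by simp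
  have "norm (dh a - dh b) \<le> Lbar * norm (a - b)"
    using lipschitz_onD[OF h_lip, of a b] by (simp add: dist_norm)
  also have "\<dots> \<le> L1 * norm (a - b)" unfolding L1_def by (intro mult_right_mono) auto
  finally show "norm (dh a - dh b) \<le> L1 * norm (a - b)" .
qed

definition "tmin = min (tau 0) (min (mu / (sqrt beta * KB)) (mu' / L1))"

lemma tmin_pos: "tmin > 0"
  unfolding tmin_def using params KB L1 by auto

lemma tau_ge: "tau n \<ge> tmin"
proof (induction n)
  case 0 then show ?case unfolding tmin_def by simp
next
  case (Suc n)
  have "min (tau n) (min (mu / (sqrt beta * KB)) (mu' / L1)) \<le> tau (Suc n)"
    unfolding recs(3)
  proof (rule step_ge)
    show "norm (K (x (Suc n)) - K (x n)) \<le> KB * norm (x (Suc n) - x n)"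
      using KB(2)[of "x (Suc n) - x n"] by (simp add: Kdiff)
  qed (use params KB L1 in auto)
  moreover have "tmin \<le> min (mu / (sqrt beta * KB)) (mu' / L1)" unfolding tmin_def by (rule min.cobounded2)
  ultimately show ?case using Suc by linarith
qed

lemma tau_pos: "tau n > 0" using tau_ge[of n] tmin_pos by linarith

lemma tau_dec: "tau (Suc n) \<le> tau n" unfolding recs(3) by (rule step_le_prev)

lemma tau_K: "sqrt beta * tau (Suc n) * norm (K (x (Suc n)) - K (x n)) \<le> mu * norm (x (Suc n) - x n)"
  unfolding recs(3) by (rule step_K) (use params in auto)

lemma tau_dh: "tau (Suc n) * norm (dh (x (Suc n)) - dh (x n)) \<le> mu' * norm (x (Suc n) - x n)"
  unfolding recs(3) by (rule step_dh) (use params in auto)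

lemma SX: "\<exists>c. f (x (Suc n)) = ereal c \<and>
   (\<forall>u. ereal (c + inner ((1 / tau n) *\<^sub>R (z (Suc n) - tau n *\<^sub>R adjoint K (y n) - tau n *\<^sub>R dh (x n) - x (Suc n))) (u - x (Suc n))) \<le> f u)"
  using prox_opt[OF f_pcl tau_pos recs(2)] .

lemma w_eq: "w (Suc n) = K (x (Suc n)) + (1 / (beta * tau (Suc n))) *\<^sub>R (y n - y (Suc n))"
proof -
  have bt: "beta * tau (Suc n) > 0" using params tau_pos by simp
  have "beta \<noteq> 0" "tau (Suc n) \<noteq> 0" using bt by auto
  then show ?thesis unfolding recs(5)[of n] by (simp add: algebra_simps)
qed

lemma SY: "\<exists>e. G (y (Suc n)) = ereal e \<and>
   (\<forall>y'. ereal e + ereal (inner (w (Suc n)) (y' - y (Suc n)) + gam_g / 2 * norm (y' - y (Suc n))^2) \<le> G y')"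
proof -
  define s where "s = beta * tau (Suc n)"
  have s: "s > 0" unfolding s_def using params tau_pos by simp
  have lam: "1 / s > 0" using s by simp
  obtain cg where cg: "g (w (Suc n)) = ereal cg"
    and sg: "\<forall>u. ereal (cg + inner ((1 / (1 / s)) *\<^sub>R ((1 / s) *\<^sub>R y n + K (x (Suc n)) - w (Suc n))) (u - w (Suc n))) \<le> g u"
    using prox_opt[OF g_pcl lam recs(4)[of n, folded s_def]] by blast
  have v: "(1 / (1 / s)) *\<^sub>R ((1 / s) *\<^sub>R y n + K (x (Suc n)) - w (Suc n)) = y (Suc n)"
    unfolding recs(5)[of n, folded s_def] using s by (simp add: algebra_simps)
  have sg': "\<And>u. ereal (cg + inner (y (Suc n)) (u - w (Suc n))) \<le> g u" using sg[rule_format, unfolded v] .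
  note cj = conj_from_subgrad[OF cg sg']
  define e where "e = inner (w (Suc n)) (y (Suc n)) - cg"
  have Ge: "G (y (Suc n)) = ereal e" using cj(1) unfolding e_def .
  have "w (Suc n) \<in> subdiff G (y (Suc n))"
    unfolding subdiff_def
  proof (intro CollectI conjI allI)
    show "\<bar>G (y (Suc n))\<bar> \<noteq> \<infinity>" using Ge by simp
  next
    fix y'
    have "G (y (Suc n)) + ereal (inner (w (Suc n)) (y' - y (Suc n))) = ereal (inner (w (Suc n)) y' - cg)"
      using Ge unfolding e_def by (simp add: inner_diff_right)
    then show "G (y (Suc n)) + ereal (inner (w (Suc n)) (y' - y (Suc n))) \<le> G y'" using cj(2) by simp
  qed
  then have "\<forall>y'. G (y (Suc n)) + ereal (inner (w (Suc n)) (y' - y (Suc n)) + gam_g / 2 * norm (y' - y (Suc n))^2) \<le> G y'"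
    using g_sc(2) unfolding strongly_convex_efun_def by blast
  then show ?thesis using Ge by auto
qed

end


context pg begin

lemma G_nm: "G v \<noteq> -\<infinity>"
proof -
  obtain e where "\<forall>y'. ereal e + ereal (inner (w (Suc 0)) (y' - y (Suc 0)) + gam_g / 2 * norm (y' - y (Suc 0))^2) \<le> G y'"
    using SY[of 0] by blast
  then have "ereal (e + (inner (w (Suc 0)) (v - y (Suc 0)) + gam_g / 2 * norm (v - y (Suc 0))^2)) \<le> G v" by simp
  then show ?thesis by auto
qed

lemma h_grad: "h u - h v \<ge> inner (dh v) (u - v)"
proof -
  have "h u - h v \<ge> inner (dh v) (u - v) + gam_h / 2 * norm (u - v)^2"
    using h_sc(2) unfolding strongly_convex_grad_def by blast
  moreover have "gam_h / 2 * norm (u - v)^2 \<ge> 0" using h_sc(1) by simp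
  ultimately show ?thesis by linarith
qed

lemma saddle: "\<exists>fb gb. f xb = ereal fb \<and> G yb = ereal gb \<and>
   (\<forall>u. ereal (fb + inner (- adjoint K yb - dh xb) (u - xb)) \<le> f u) \<and>
   (\<forall>y'. ereal gb + ereal (inner (K xb) (y' - yb) + gam_g / 2 * norm (y' - yb)^2) \<le> G y')"
proof -
  obtain a1 where fx1: "f (x (Suc 0)) = ereal a1" using SX[of 0] by blast
  obtain e1 where Gy1: "G (y (Suc 0)) = ereal e1" using SY[of 0] by blast
  have S1: "\<And>v. saddle_L f h K g xb v \<le> saddle_L f h K g xb yb"
    and S2: "\<And>u. saddle_L f h K g xb yb \<le> saddle_L f h K g u yb"
    using sol unfolding is_saddle_point_def by auto
  have "f xb \<noteq> \<infinity>"
  proof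
    assume inf: "f xb = \<infinity>"
    have "saddle_L f h K g xb yb \<le> saddle_L f h K g (x (Suc 0)) yb" by (rule S2)
    then show False using inf fx1 G_nm[of yb] unfolding saddle_L_def by (cases "G yb") auto
  qed
  then obtain fb where fb: "f xb = ereal fb" using f_pcl(1) unfolding proper_fun_def by (cases "f xb") auto
  have "G yb \<noteq> \<infinity>"
  proof
    assume inf: "G yb = \<infinity>"
    have "saddle_L f h K g xb (y (Suc 0)) \<le> saddle_L f h K g xb yb" by (rule S1)
    then show False using inf fb Gy1 unfolding saddle_L_def by simp
  qed
  then obtain gb where gb: "G yb = ereal gb" using G_nm[of yb] by (cases "G yb") auto
  have sub_g: "G yb + ereal (inner (K xb) (y' - yb)) \<le> G y'" for y'
  proof (cases "G y'")
    case (real s)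
    have "saddle_L f h K g xb y' \<le> saddle_L f h K g xb yb" by (rule S1)
    then have "fb + h xb + inner (K xb) y' - s \<le> fb + h xb + inner (K xb) yb - gb"
      using fb gb real unfolding saddle_L_def by simp
    then show ?thesis using gb real by (simp add: inner_diff_right)
  next
    case MInf then show ?thesis using G_nm by simp
  qed simp
  have "K xb \<in> subdiff G yb" unfolding subdiff_def using gb sub_g by auto
  then have sc: "\<forall>y'. ereal gb + ereal (inner (K xb) (y' - yb) + gam_g / 2 * norm (y' - yb)^2) \<le> G y'"
    using g_sc(2) gb unfolding strongly_convex_efun_def by metis
  have minf: "fb + h xb + inner (K xb) yb \<le> a + h u + inner (K u) yb" if "f u = ereal a" for u a
  proof -
    have "saddle_L f h K g xb yb \<le> saddle_L f h K g u yb" by (rule S2)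
    then show ?thesis using fb gb that unfolding saddle_L_def by simp
  qed
  have sub_f: "ereal (fb + inner (- adjoint K yb - dh xb) (u - xb)) \<le> f u" for u
  proof (cases "f u")
    case (real a)
    have "fb - a - inner (dh xb) (u - xb) - inner (K u - K xb) yb \<le> 0"
    proof (rule le_eps_real)
      fix t :: real assume t: "0 < t" "t \<le> 1"
      define ut where "ut = (1 - t) *\<^sub>R xb + t *\<^sub>R u"
      have fut: "f ut \<le> ereal ((1 - t) * fb + t * a)"
        unfolding ut_def using convex_efun_ineq[OF f_pcl(2), of xb fb u a t] fb real t by simp
      then obtain aT where aT: "f ut = ereal aT" "aT \<le> (1 - t) * fb + t * a"
        using f_pcl(1) unfolding proper_fun_def by (cases "f ut") auto
      have m: "fb + h xb + inner (K xb) yb \<le> aT + h ut + inner (K ut) yb" by (rule minf[OF aT(1)])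
      have utx: "ut - xb = t *\<^sub>R (u - xb)" unfolding ut_def by (simp add: algebra_simps)
      have hg: "h ut - h xb \<le> inner (dh ut) (ut - xb)"
        using h_grad[where u=xb and v=ut] by (simp add: inner_diff_right)
      have "inner (dh ut) (u - xb) = inner (dh xb) (u - xb) + inner (dh ut - dh xb) (u - xb)"
        by (simp add: inner_diff_left)
      also have "inner (dh ut - dh xb) (u - xb) \<le> L1 * norm (ut - xb) * norm (u - xb)"
      proof -
        have "inner (dh ut - dh xb) (u - xb) \<le> norm (dh ut - dh xb) * norm (u - xb)"
          using Cauchy_Schwarz_ineq2[of "dh ut - dh xb" "u - xb"] by linarith
        also have "\<dots> \<le> L1 * norm (ut - xb) * norm (u - xb)"
          using L1(2)[of ut xb] by (intro mult_right_mono) auto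
        finally show ?thesis .
      qed
      also have "norm (ut - xb) = t * norm (u - xb)" unfolding utx using t by simp
      finally have dd: "inner (dh ut) (u - xb) \<le> inner (dh xb) (u - xb) + L1 * (t * norm (u - xb)) * norm (u - xb)"
        by simp
      have Kut: "K ut = (1 - t) *\<^sub>R K xb + t *\<^sub>R K u"
        unfolding ut_def using linear_add[OF K_lin] linear_scale[OF K_lin] by simp
      have "h ut - h xb \<le> t * inner (dh ut) (u - xb)" using hg unfolding utx by simp
      also have "\<dots> \<le> t * (inner (dh xb) (u - xb) + L1 * (t * norm (u - xb)) * norm (u - xb))"
        using dd t by (intro mult_left_mono) auto
      finally have hb: "h ut - h xb \<le> t * inner (dh xb) (u - xb) + t * (t * (L1 * norm (u - xb)^2))"
        by (simp add: algebra_simps power2_eq_square)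
      have Ki: "inner (K ut) yb = (1 - t) * inner (K xb) yb + t * inner (K u) yb"
        unfolding Kut by (simp add: inner_add_left)
      have "t * (fb - a - inner (dh xb) (u - xb) - inner (K u - K xb) yb) \<le> t * (t * (L1 * norm (u - xb)^2))"
        using m aT(2) hb Ki by (simp add: algebra_simps inner_diff_left)
      then show "fb - a - inner (dh xb) (u - xb) - inner (K u - K xb) yb \<le> t * (L1 * norm (u - xb)^2)"
        using t by (metis mult_le_cancel_left_pos)
    next
      show "0 \<le> L1 * norm (u - xb)^2" using L1(1) by simp
    qed
    moreover have "inner (adjoint K yb) (u - xb) = inner (K u - K xb) yb"
      using adj[of yb "u - xb"] by (simp add: Kdiff inner_commute)
    ultimately show ?thesis using real by (simp add: inner_diff_left inner_minus_left)
  next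
    case MInf then show ?thesis using f_pcl(1) unfolding proper_fun_def by blast
  qed simp
  show ?thesis using fb gb sub_f sc by blast
qed

end


lemma norm_diff_sq:
  fixes p q :: "'a::real_inner"
  shows "norm (p - q)^2 = norm p^2 + norm q^2 - 2 * inner p q"
  unfolding power2_norm_eq_inner by (simp add: inner_diff_left inner_diff_right inner_commute)

lemma polar:
  fixes a b c :: "'a::real_inner"
  shows "inner (a - c) (b - c) = (norm (a - c)^2 + norm (b - c)^2 - norm (a - b)^2) / 2"
proof -
  have "a - b = (a - c) - (b - c)" by simp
  then have "norm (a - b)^2 = norm (a - c)^2 + norm (b - c)^2 - 2 * inner (a - c) (b - c)"
    by (metis norm_diff_sq)
  then show ?thesis by simp
qed

lemma cc_ident:
  fixes a b v :: "'a::real_inner"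
  assumes "c + d = 1"
  shows "norm ((c *\<^sub>R a + d *\<^sub>R b) - v)^2 = c * norm (a - v)^2 + d * norm (b - v)^2 - c * d * norm (a - b)^2"
proof -
  have e: "(c *\<^sub>R a + d *\<^sub>R b) - v = c *\<^sub>R (a - v) + d *\<^sub>R (b - v)"
    using assms by (simp add: algebra_simps) (metis add.commute add_diff_cancel_left' scaleR_add_left scaleR_one)
  have "a - b = (a - v) - (b - v)" by simp
  then have ab: "norm (a - b)^2 = norm (a - v)^2 + norm (b - v)^2 - 2 * inner (a - v) (b - v)"
    by (metis norm_diff_sq)
  have "norm (c *\<^sub>R (a - v) + d *\<^sub>R (b - v))^2 = c^2 * norm (a - v)^2 + d^2 * norm (b - v)^2 + 2 * c * d * inner (a - v) (b - v)"
    unfolding power2_norm_eq_inner by (simp add: inner_add_left inner_add_right inner_commute algebra_simps power2_eq_square)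
  moreover have "c^2 = c - c * d" "d^2 = d - c * d"
  proof -
    have dd: "d = 1 - c" using assms by simp
    show "c^2 = c - c * d" "d^2 = d - c * d" unfolding dd by (simp_all add: power2_eq_square algebra_simps)
  qed
  ultimately show ?thesis unfolding e ab by (simp add: algebra_simps)
qed

lemma amgm_sqrt:
  fixes a b beta :: real
  assumes "beta > 0"
  shows "a * b / sqrt beta \<le> (a^2 / beta + b^2) / 2"
proof -
  have "0 \<le> (a / sqrt beta - b)^2" by simp
  also have "\<dots> = a^2 / beta + b^2 - 2 * (a * b / sqrt beta)"
    using assms by (simp add: power2_eq_square field_simps)
  finally have "2 * (a * b / sqrt beta) \<le> a^2 / beta + b^2" by linarith
  from divide_right_mono[OF this, of 2] show ?thesis by simp
qed



context pg begin

definition "PP = psi / (2 * (psi - 1))"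

definition "E k = PP * norm (z (Suc (Suc k)) - xb)^2 + norm (y k - yb)^2 / (2 * beta)
                 + mu' / 2 * norm (x (Suc k) - x k)^2"

lemma h_mono: "inner (dh u - dh v) (u - v) \<ge> gam_h * norm (u - v)^2"
proof -
  have "h u - h v \<ge> inner (dh v) (u - v) + gam_h / 2 * norm (u - v)^2"
    "h v - h u \<ge> inner (dh u) (v - u) + gam_h / 2 * norm (v - u)^2"
    using h_sc(2) unfolding strongly_convex_grad_def by blast+
  moreover have "norm (v - u) = norm (u - v)" by (rule norm_minus_commute)
  moreover have "inner (dh u) (v - u) = - inner (dh u) (u - v)" by (simp add: inner_diff_right)
  ultimately show ?thesis by (simp add: inner_diff_left)
qed

lemma energy:
  assumes c1: "tau (Suc k) / tau k \<ge> 1 / 2"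
    and c2: "(tau (Suc k) / tau k) * psi / 2 - mu * (tau (Suc k) / tau (Suc (Suc k))) / 2 - mu' \<ge> delta"
    and c3: "1 - mu * (tau (Suc k) / tau (Suc (Suc k))) \<ge> 0"
  shows "E (Suc k) + delta * norm (x (Suc (Suc k)) - x (Suc k))^2 + psi / 4 * norm (z (Suc (Suc k)) - x (Suc k))^2
          + tau (Suc k) * gam_h * norm (x (Suc k) - xb)^2 + tau (Suc k) * gam_g * norm (y (Suc k) - yb)^2 \<le> E k"
proof -
  let ?x0 = "x k" and ?x1 = "x (Suc k)" and ?x2 = "x (Suc (Suc k))"
  let ?z1 = "z (Suc k)" and ?z2 = "z (Suc (Suc k))" and ?z3 = "z (Suc (Suc (Suc k)))"
  let ?y0 = "y k" and ?y1 = "y (Suc k)"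
  let ?t0 = "tau k" and ?t1 = "tau (Suc k)" and ?t2 = "tau (Suc (Suc k))"
  let ?Ka = "adjoint K"
  obtain fb gb where fb: "f xb = ereal fb" and gb: "G yb = ereal gb"
    and sf: "\<And>u. ereal (fb + inner (- adjoint K yb - dh xb) (u - xb)) \<le> f u"
    and sg: "\<And>y'. ereal gb + ereal (inner (K xb) (y' - yb) + gam_g / 2 * norm (y' - yb)^2) \<le> G y'"
    using saddle by blast
  obtain c2 where c2f: "f ?x2 = ereal c2"
    and s2: "\<And>u. ereal (c2 + inner ((1 / ?t1) *\<^sub>R (?z2 - ?t1 *\<^sub>R ?Ka ?y1 - ?t1 *\<^sub>R dh ?x1 - ?x2)) (u - ?x2)) \<le> f u"
    using SX[of "Suc k"] by blast
  obtain c1 where c1f: "f ?x1 = ereal c1"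
    and s1: "\<And>u. ereal (c1 + inner ((1 / ?t0) *\<^sub>R (?z1 - ?t0 *\<^sub>R ?Ka ?y0 - ?t0 *\<^sub>R dh ?x0 - ?x1)) (u - ?x1)) \<le> f u"
    using SX[of k] by blast
  obtain e1 where e1: "G ?y1 = ereal e1"
    and sy: "\<And>y'. ereal e1 + ereal (inner (w (Suc k)) (y' - ?y1) + gam_g / 2 * norm (y' - ?y1)^2) \<le> G y'"
    using SY[of k] by blast
  have i1: "c2 + inner ((1 / ?t1) *\<^sub>R (?z2 - ?t1 *\<^sub>R ?Ka ?y1 - ?t1 *\<^sub>R dh ?x1 - ?x2)) (xb - ?x2) \<le> fb"
    using s2[of xb] fb by simp
  have i2: "c1 + inner ((1 / ?t0) *\<^sub>R (?z1 - ?t0 *\<^sub>R ?Ka ?y0 - ?t0 *\<^sub>R dh ?x0 - ?x1)) (?x2 - ?x1) \<le> c2"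
    using s1[of ?x2] c2f by simp
  have i3: "fb + inner (- ?Ka yb - dh xb) (?x1 - xb) \<le> c1" using sf[of ?x1] c1f by simp
  have i4: "e1 + (inner (w (Suc k)) (yb - ?y1) + gam_g / 2 * norm (yb - ?y1)^2) \<le> gb"
    using sy[of yb] gb by simp
  have i5: "gb + (inner (K xb) (?y1 - yb) + gam_g / 2 * norm (?y1 - yb)^2) \<le> e1"
    using sg[of ?y1] e1 by simp
  have t0: "?t0 > 0" and t1: "?t1 > 0" and t2: "?t2 > 0" using tau_pos by auto
  have bp: "beta > 0" using params by simp
  have KI: "inner (?y1 - ?y0) (K (?x2 - ?x1)) + inner (?z2 - ?x2) (xb - ?x2) / ?t1
       + inner (?z1 - ?x1) (?x2 - ?x1) / ?t0 + inner (dh ?x1 - dh ?x0) (?x2 - ?x1) + inner (dh ?x1 - dh xb) (?x1 - xb)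
       + inner (?y0 - ?y1) (yb - ?y1) / (beta * ?t1)
     = inner ((1 / ?t1) *\<^sub>R (?z2 - ?t1 *\<^sub>R ?Ka ?y1 - ?t1 *\<^sub>R dh ?x1 - ?x2)) (xb - ?x2)
       + inner ((1 / ?t0) *\<^sub>R (?z1 - ?t0 *\<^sub>R ?Ka ?y0 - ?t0 *\<^sub>R dh ?x0 - ?x1)) (?x2 - ?x1)
       + inner (- ?Ka yb - dh xb) (?x1 - xb)
       + inner (K ?x1 + (1 / (beta * ?t1)) *\<^sub>R (?y0 - ?y1) - K xb) (yb - ?y1)"
    using key_identity[OF K_lin adj, of ?t0 ?t1 beta ?z2 ?y1 "dh ?x1" ?x2 xb ?z1 ?y0 "dh ?x0" ?x1 yb "dh xb"]
      t0 t1 bp by simp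
  have wI: "inner (K ?x1 + (1 / (beta * ?t1)) *\<^sub>R (?y0 - ?y1) - K xb) (yb - ?y1)
      = inner (w (Suc k)) (yb - ?y1) + inner (K xb) (?y1 - yb)"
    unfolding w_eq[of k] by (simp add: inner_diff_left inner_diff_right)
  have nyy: "norm (yb - ?y1) = norm (?y1 - yb)" by (rule norm_minus_commute)
  have main: "inner (?z2 - ?x2) (xb - ?x2) / ?t1 + inner (?z1 - ?x1) (?x2 - ?x1) / ?t0
      + inner (?y1 - ?y0) (K (?x2 - ?x1)) + inner (dh ?x1 - dh ?x0) (?x2 - ?x1) + inner (dh ?x1 - dh xb) (?x1 - xb)
      + inner (?y0 - ?y1) (yb - ?y1) / (beta * ?t1) + gam_g * norm (?y1 - yb)^2 \<le> 0"
    using i1 i2 i3 i4 i5 KI wI nyy by simp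
  have a1: "inner (?z2 - ?x2) (xb - ?x2) = (norm (?z2 - ?x2)^2 + norm (?x2 - xb)^2 - norm (?z2 - xb)^2) / 2"
    using polar[of ?z2 ?x2 xb] by (simp add: norm_minus_commute)
  have ps: "psi \<noteq> 0" using params by simp
  have zx: "?z1 - ?x1 = psi *\<^sub>R (?z2 - ?x1)"
  proof -
    have m1: "psi * ((psi - 1) / psi) = psi - 1" "psi * (1 / psi) = 1" using ps by simp_all
    have "psi *\<^sub>R (((psi - 1) / psi) *\<^sub>R ?x1 + (1 / psi) *\<^sub>R ?z1 - ?x1)
        = (psi * ((psi - 1) / psi)) *\<^sub>R ?x1 + (psi * (1 / psi)) *\<^sub>R ?z1 - psi *\<^sub>R ?x1"
      by (simp only: scaleR_right_diff_distrib scaleR_add_right scaleR_scaleR)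
    also have "\<dots> = ?z1 - ?x1" unfolding m1 by (simp add: scaleR_diff_left)
    finally show ?thesis unfolding recs(1)[of "Suc k"] by simp
  qed
  have a2: "inner (?z1 - ?x1) (?x2 - ?x1) = psi * (norm (?z2 - ?x1)^2 + norm (?x2 - ?x1)^2 - norm (?z2 - ?x2)^2) / 2"
    unfolding zx using polar[of ?z2 ?x1 ?x2] by simp
  have Y: "inner (?y0 - ?y1) (yb - ?y1) = (norm (?y1 - ?y0)^2 + norm (?y1 - yb)^2 - norm (?y0 - yb)^2) / 2"
    using polar[of ?y0 ?y1 yb] by (simp add: norm_minus_commute)
  have conv: "norm (?z3 - xb)^2 = ((psi - 1) / psi) * norm (?x2 - xb)^2 + (1 / psi) * norm (?z2 - xb)^2
      - ((psi - 1) / psi) * (1 / psi) * norm (?z2 - ?x2)^2"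
  proof -
    have cd: "(psi - 1) / psi + 1 / psi = 1" using ps by (simp add: field_simps)
    show ?thesis unfolding recs(1)[of "Suc (Suc k)"] cc_ident[OF cd] by (simp add: norm_minus_commute)
  qed
  have Tb: "inner (?y1 - ?y0) (K (?x2 - ?x1)) \<ge> - (mu / (2 * ?t2)) * (norm (?y1 - ?y0)^2 / beta + norm (?x2 - ?x1)^2)"
  proof -
    have "\<bar>inner (?y1 - ?y0) (K (?x2 - ?x1))\<bar> \<le> norm (?y1 - ?y0) * norm (K (?x2 - ?x1))"
      by (rule Cauchy_Schwarz_ineq2)
    also have "norm (K (?x2 - ?x1)) \<le> mu * norm (?x2 - ?x1) / (sqrt beta * ?t2)"
      using tau_K[of "Suc k"] t2 bp by (simp add: Kdiff pos_le_divide_eq ac_simps)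
    then have "norm (?y1 - ?y0) * norm (K (?x2 - ?x1)) \<le> norm (?y1 - ?y0) * (mu * norm (?x2 - ?x1) / (sqrt beta * ?t2))"
      by (intro mult_left_mono) auto
    also have "\<dots> = (mu / ?t2) * (norm (?y1 - ?y0) * norm (?x2 - ?x1) / sqrt beta)" by (simp add: ac_simps)
    also have "\<dots> \<le> (mu / ?t2) * ((norm (?y1 - ?y0)^2 / beta + norm (?x2 - ?x1)^2) / 2)"
      using amgm_sqrt[OF bp] params t2 by (intro mult_left_mono) auto
    finally show ?thesis by (simp add: abs_le_iff)
  qed
  have Hxb: "inner (dh ?x1 - dh ?x0) (?x2 - ?x1) \<ge> - (mu' / (2 * ?t1)) * (norm (?x1 - ?x0)^2 + norm (?x2 - ?x1)^2)"
  proof -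
    have "\<bar>inner (dh ?x1 - dh ?x0) (?x2 - ?x1)\<bar> \<le> norm (dh ?x1 - dh ?x0) * norm (?x2 - ?x1)"
      by (rule Cauchy_Schwarz_ineq2)
    also have "norm (dh ?x1 - dh ?x0) \<le> mu' * norm (?x1 - ?x0) / ?t1"
      using tau_dh[of k] t1 by (simp add: pos_le_divide_eq ac_simps)
    then have "norm (dh ?x1 - dh ?x0) * norm (?x2 - ?x1) \<le> (mu' * norm (?x1 - ?x0) / ?t1) * norm (?x2 - ?x1)"
      by (intro mult_right_mono) auto
    also have "\<dots> = (mu' / ?t1) * (norm (?x1 - ?x0) * norm (?x2 - ?x1))" by simp
    also have "\<dots> \<le> (mu' / ?t1) * ((norm (?x1 - ?x0)^2 + norm (?x2 - ?x1)^2) / 2)"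
    proof -
      have "norm (?x1 - ?x0) * norm (?x2 - ?x1) \<le> (norm (?x1 - ?x0)^2 + norm (?x2 - ?x1)^2) / 2"
        using sum_squares_bound[of "norm (?x1 - ?x0)" "norm (?x2 - ?x1)"] by simp
      then show ?thesis using params t1 by (intro mult_left_mono) auto
    qed
    finally show ?thesis by (simp add: abs_le_iff)
  qed
  have Hmb: "inner (dh ?x1 - dh xb) (?x1 - xb) \<ge> gam_h * norm (?x1 - xb)^2" by (rule h_mono)
  have ea: "PP * norm (?z3 - xb)^2 + norm (?y1 - yb)^2 / (2 * beta) + mu' / 2 * norm (?x2 - ?x1)^2
      + delta * norm (?x2 - ?x1)^2 + psi / 4 * norm (?z2 - ?x1)^2
      + ?t1 * gam_h * norm (?x1 - xb)^2 + ?t1 * gam_g * norm (?y1 - yb)^2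
     \<le> PP * norm (?z2 - xb)^2 + norm (?y0 - yb)^2 / (2 * beta) + mu' / 2 * norm (?x1 - ?x0)^2"
  proof (rule energy_arith[OF t0 t1 t2 bp _ psi_sq main a1 a2 Y conv Tb Hxb Hmb])
    show "1 < psi" using params by simp
    show "?t1 \<le> ?t0" by (rule tau_dec)
    show "PP = psi / (2 * (psi - 1))" by (rule PP_def)
  qed (use c1 c2 c3 in auto)
  then show ?thesis unfolding E_def by simp
qed

end


lemma bound_arith:
  fixes X D a1 a2 a3 a4 d1 d2 d3 d4 n1 n2 n3 n4 :: real
  assumes n: "n1 \<ge> 0" "n2 \<ge> 0" "n3 \<ge> 0" "n4 \<ge> 0"
    and a: "a1 \<ge> 0" "a2 \<ge> 0" "a3 \<ge> 0" "a4 \<ge> 0"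
    and d: "d1 > 0" "d2 > 0" "d3 > 0" "d4 > 0"
    and X: "X \<le> a1 * n1 + a2 * n2 + a3 * n3 + a4 * n4"
    and D: "d1 * n1 + d2 * n2 + d3 * n3 + d4 * n4 \<le> D"
  shows "X \<le> (a1 / d1 + a2 / d2 + a3 / d3 + a4 / d4) * D"
proof -
  define C where "C = a1 / d1 + a2 / d2 + a3 / d3 + a4 / d4"
  have C0: "C \<ge> 0" unfolding C_def using a d by simp
  have k: "a * nn \<le> C * (dd * nn)" if "a / dd \<le> C" "dd > 0" "nn \<ge> 0" for a dd nn
  proof -
    have "a = (a / dd) * dd" using that by simp
    then have "a * nn = (a / dd) * (dd * nn)" by (metis mult.assoc)
    also have "\<dots> \<le> C * (dd * nn)" using that by (intro mult_right_mono) auto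
    finally show ?thesis .
  qed
  have "a1 / d1 \<le> C" "a2 / d2 \<le> C" "a3 / d3 \<le> C" "a4 / d4 \<le> C" unfolding C_def using a d by simp_all
  then have "a1 * n1 + a2 * n2 + a3 * n3 + a4 * n4 \<le> C * (d1 * n1) + C * (d2 * n2) + C * (d3 * n3) + C * (d4 * n4)"
    using k n d by (meson add_mono)
  also have "\<dots> = C * (d1 * n1 + d2 * n2 + d3 * n3 + d4 * n4)" by (simp add: algebra_simps)
  also have "\<dots> \<le> C * D" using D C0 by (rule mult_left_mono)
  finally show ?thesis using X unfolding C_def by linarith
qed

lemma contraction_arith:
  fixes Ek Ek1 D C :: real
  assumes "Ek1 + D \<le> Ek" "Ek1 \<le> C * D" "C > 0"
  shows "Ek1 \<le> (C / (1 + C)) * Ek"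
proof -
  have "Ek1 \<le> C * (Ek - Ek1)" using assms by (smt (verit) mult_left_mono)
  then have "Ek1 * (1 + C) \<le> C * Ek" by (simp add: algebra_simps)
  then show ?thesis using assms(3) by (simp add: field_simps)
qed

lemma sq3: "(a + b + c)^2 \<le> 3 * (a^2 + b^2 + (c::real)^2)"
proof -
  have "0 \<le> (a - b)^2 + (b - c)^2 + (a - c)^2" by simp
  then show ?thesis by (simp add: power2_eq_square algebra_simps)
qed

context pg begin

lemma golden_lt2: "golden < 2"
proof -
  have "sqrt 5 < 3" by (rule real_less_lsqrt) auto
  then show ?thesis unfolding golden_def by simp
qed

lemma mu_lt1: "mu < 1" using params golden_lt2 by simp

lemma PP_pos: "PP > 0" unfolding PP_def using params by simp

lemma E_nonneg: "E k \<ge> 0" unfolding E_def using PP_pos params by simp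

lemma z_bound: "norm (z (Suc (Suc (Suc k))) - xb)^2
   \<le> 3 * (norm (x (Suc k) - xb)^2 + norm (x (Suc (Suc k)) - x (Suc k))^2 + norm (z (Suc (Suc k)) - x (Suc k))^2)"
proof -
  let ?x1 = "x (Suc k)" and ?x2 = "x (Suc (Suc k))" and ?z2 = "z (Suc (Suc k))"
  define c where "c = (psi - 1) / psi"
  have ps: "psi \<noteq> 0" using params by simp
  have d: "1 / psi = 1 - c" unfolding c_def using ps by (simp add: field_simps)
  have c01: "0 \<le> c" "c \<le> 1" unfolding c_def using params by auto
  have eq: "z (Suc (Suc (Suc k))) - xb = (?x1 - xb) + c *\<^sub>R (?x2 - ?x1) + (1 - c) *\<^sub>R (?z2 - ?x1)"
    unfolding recs(1)[of "Suc (Suc k)"] d c_def[symmetric] by (simp add: algebra_simps)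
  have "norm (z (Suc (Suc (Suc k))) - xb) \<le> norm (?x1 - xb) + norm (c *\<^sub>R (?x2 - ?x1)) + norm ((1 - c) *\<^sub>R (?z2 - ?x1))"
    unfolding eq by (meson add_mono norm_triangle_ineq order_trans order_refl)
  also have "\<dots> \<le> norm (?x1 - xb) + norm (?x2 - ?x1) + norm (?z2 - ?x1)"
  proof -
    have "norm (c *\<^sub>R (?x2 - ?x1)) \<le> norm (?x2 - ?x1)" using c01 by (simp add: mult_left_le_one_le)
    moreover have "norm ((1 - c) *\<^sub>R (?z2 - ?x1)) \<le> norm (?z2 - ?x1)" using c01 by (simp add: mult_left_le_one_le)
    ultimately show ?thesis by simp
  qed
  finally have "norm (z (Suc (Suc (Suc k))) - xb)^2 \<le> (norm (?x1 - xb) + norm (?x2 - ?x1) + norm (?z2 - ?x1))^2"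
    by (simp add: power_mono)
  also have "\<dots> \<le> 3 * (norm (?x1 - xb)^2 + norm (?x2 - ?x1)^2 + norm (?z2 - ?x1)^2)" by (rule sq3)
  finally show ?thesis .
qed

definition "delta = (psi / 2 - mu / 2 - mu') / 2"

lemma delta_pos: "delta > 0" unfolding delta_def using params by simp

lemma eventually_conds: "\<exists>N. \<forall>k\<ge>N. tau (Suc k) / tau k \<ge> 1 / 2
   \<and> (tau (Suc k) / tau k) * psi / 2 - mu * (tau (Suc k) / tau (Suc (Suc k))) / 2 - mu' \<ge> delta
   \<and> 1 - mu * (tau (Suc k) / tau (Suc (Suc k))) \<ge> 0"
proof -
  have "decseq tau" using tau_dec by (simp add: decseq_SucI)
  then obtain L where L: "tau \<longlonglongrightarrow> L" "\<forall>i. L \<le> tau i"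
    using decseq_convergent[of tau tmin] tau_ge by blast
  have L0: "L \<noteq> 0"
  proof -
    have "L \<ge> tmin"
      using L(1) tau_ge by (intro LIMSEQ_le_const) auto
    then show ?thesis using tmin_pos by simp
  qed
  have r1: "(\<lambda>k. tau (Suc k) / tau k) \<longlonglongrightarrow> 1"
    using tendsto_divide[OF LIMSEQ_Suc[OF L(1)] L(1) L0] L0 by simp
  have r2: "(\<lambda>k. tau (Suc k) / tau (Suc (Suc k))) \<longlonglongrightarrow> 1"
    using tendsto_divide[OF LIMSEQ_Suc[OF L(1)] LIMSEQ_Suc[OF LIMSEQ_Suc[OF L(1)]] L0] L0 by simp
  have e1: "eventually (\<lambda>k. tau (Suc k) / tau k > 1 / 2) sequentially"
    using order_tendstoD(1)[OF r1, of "1/2"] by simp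
  have l2: "(\<lambda>k. (tau (Suc k) / tau k) * psi / 2 - mu * (tau (Suc k) / tau (Suc (Suc k))) / 2 - mu')
      \<longlonglongrightarrow> 1 * psi / 2 - mu * 1 / 2 - mu'"
    by (intro tendsto_intros r1 r2) simp_all
  have "delta < 1 * psi / 2 - mu * 1 / 2 - mu'" using delta_pos unfolding delta_def by simp
  from order_tendstoD(1)[OF l2 this]
  have e2: "eventually (\<lambda>k. (tau (Suc k) / tau k) * psi / 2 - mu * (tau (Suc k) / tau (Suc (Suc k))) / 2 - mu' > delta) sequentially" .
  have l3: "(\<lambda>k. 1 - mu * (tau (Suc k) / tau (Suc (Suc k)))) \<longlonglongrightarrow> 1 - mu * 1"
    by (intro tendsto_intros r2)
  have "0 < 1 - mu * 1" using mu_lt1 by simp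
  from order_tendstoD(1)[OF l3 this]
  have e3: "eventually (\<lambda>k. 1 - mu * (tau (Suc k) / tau (Suc (Suc k))) > 0) sequentially" .
  from eventually_conj[OF e1 eventually_conj[OF e2 e3]]
  obtain N where "\<forall>k\<ge>N. tau (Suc k) / tau k > 1 / 2
     \<and> (tau (Suc k) / tau k) * psi / 2 - mu * (tau (Suc k) / tau (Suc (Suc k))) / 2 - mu' > delta
     \<and> 1 - mu * (tau (Suc k) / tau (Suc (Suc k))) > 0"
    unfolding eventually_sequentially by blast
  then show ?thesis by (meson less_imp_le)
qed

definition "CC = (3 * PP) / (tmin * gam_h) + (3 * PP + mu' / 2) / delta + (3 * PP) / (psi / 4)
                 + (1 / (2 * beta)) / (tmin * gam_g)"

lemma CC_pos: "CC > 0"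
  unfolding CC_def using PP_pos tmin_pos h_sc g_sc params delta_pos
  by (intro add_pos_pos) auto

definition "zeta = CC / (1 + CC)"

lemma zeta: "0 < zeta" "zeta < 1" unfolding zeta_def using CC_pos by auto

lemma step_contr:
  assumes "\<forall>k\<ge>N. tau (Suc k) / tau k \<ge> 1 / 2
   \<and> (tau (Suc k) / tau k) * psi / 2 - mu * (tau (Suc k) / tau (Suc (Suc k))) / 2 - mu' \<ge> delta
   \<and> 1 - mu * (tau (Suc k) / tau (Suc (Suc k))) \<ge> 0" and k: "k \<ge> N"
  shows "E (Suc k) \<le> zeta * E k"
    and "tmin * gam_h * norm (x (Suc k) - xb)^2 \<le> E k"
proof -
  let ?x1 = "x (Suc k)" and ?x2 = "x (Suc (Suc k))" and ?z2 = "z (Suc (Suc k))" and ?y1 = "y (Suc k)"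
  define D where "D = delta * norm (?x2 - ?x1)^2 + psi / 4 * norm (?z2 - ?x1)^2
          + tau (Suc k) * gam_h * norm (?x1 - xb)^2 + tau (Suc k) * gam_g * norm (?y1 - yb)^2"
  have en: "E (Suc k) + D \<le> E k" unfolding D_def using energy assms k by (simp add: add.assoc)
  have t1: "tau (Suc k) \<ge> tmin" by (rule tau_ge)
  have Dlow: "(tmin * gam_h) * norm (?x1 - xb)^2 + delta * norm (?x2 - ?x1)^2 + (psi / 4) * norm (?z2 - ?x1)^2
      + (tmin * gam_g) * norm (?y1 - yb)^2 \<le> D"
  proof -
    have "tmin * gam_h * norm (?x1 - xb)^2 \<le> tau (Suc k) * gam_h * norm (?x1 - xb)^2"
      using t1 h_sc by (intro mult_right_mono) auto
    moreover have "tmin * gam_g * norm (?y1 - yb)^2 \<le> tau (Suc k) * gam_g * norm (?y1 - yb)^2"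
      using t1 g_sc by (intro mult_right_mono) auto
    ultimately show ?thesis unfolding D_def by linarith
  qed
  have Eup: "E (Suc k) \<le> (3 * PP) * norm (?x1 - xb)^2 + (3 * PP + mu' / 2) * norm (?x2 - ?x1)^2
      + (3 * PP) * norm (?z2 - ?x1)^2 + (1 / (2 * beta)) * norm (?y1 - yb)^2"
  proof -
    have "PP * norm (z (Suc (Suc (Suc k))) - xb)^2
       \<le> PP * (3 * (norm (?x1 - xb)^2 + norm (?x2 - ?x1)^2 + norm (?z2 - ?x1)^2))"
      using z_bound PP_pos by (intro mult_left_mono) auto
    then show ?thesis unfolding E_def by (simp add: algebra_simps)
  qed
  have "E (Suc k) \<le> CC * D" unfolding CC_def
    by (rule bound_arith[OF _ _ _ _ _ _ _ _ _ _ _ _ Eup Dlow])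
       (use PP_pos tmin_pos h_sc g_sc params delta_pos in auto)
  from contraction_arith[OF en this CC_pos] show "E (Suc k) \<le> zeta * E k" unfolding zeta_def .
  have "D \<le> E k" using en E_nonneg[of "Suc k"] by linarith
  moreover have "tmin * gam_h * norm (?x1 - xb)^2 \<le> D" using Dlow delta_pos params
    by (smt (verit) mult_nonneg_nonneg zero_le_power2 tmin_pos g_sc(1) divide_nonneg_pos)
  ultimately show "tmin * gam_h * norm (?x1 - xb)^2 \<le> E k" by linarith
qed

end


context pg begin

lemma main_result:
  "\<exists>V1 V2 Z zeta n4. V1 > 0 \<and> V2 > 0 \<and> Z > 0 \<and> 0 < zeta \<and> zeta < 1 \<and>
           (\<forall>n\<ge>n4. norm (xb - z (n + 2))^2 \<le> Z * zeta ^ n \<and>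
                     norm (yb - y n)^2 \<le> V1 * zeta ^ n \<and>
                     norm (x n - x (n + 1))^2 \<le> V2 * zeta ^ n)
         \<and> R_linear_conv (\<lambda>n. (x n, y n)) (xb, yb)"
proof -
  obtain N where NN: "\<forall>k\<ge>N. tau (Suc k) / tau k \<ge> 1 / 2
   \<and> (tau (Suc k) / tau k) * psi / 2 - mu * (tau (Suc k) / tau (Suc (Suc k))) / 2 - mu' \<ge> delta
   \<and> 1 - mu * (tau (Suc k) / tau (Suc (Suc k))) \<ge> 0" using eventually_conds by blast
  note sc = step_contr[OF NN]
  have geo: "E (N + j) \<le> E N * zeta ^ j" for j
  proof (induction j)
    case 0 then show ?case by simp
  next
    case (Suc j)
    have "E (N + Suc j) = E (Suc (N + j))" by simp
    also have "\<dots> \<le> zeta * E (N + j)" by (rule sc(1)) simp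
    also have "\<dots> \<le> zeta * (E N * zeta ^ j)" using Suc zeta by (intro mult_left_mono) auto
    finally show ?case by (simp add: algebra_simps)
  qed
  define A where "A = E N / zeta ^ N"
  have A0: "A \<ge> 0" unfolding A_def using E_nonneg zeta by simp
  have EA: "E k \<le> A * zeta ^ k" if kN: "k \<ge> N" for k
  proof -
    obtain j where k: "k = N + j" using le_Suc_ex[OF kN] by blast
    have "E k \<le> E N * zeta ^ j" unfolding k by (rule geo)
    moreover have "A * zeta ^ k = E N * zeta ^ j"
    proof -
      have zN: "zeta ^ N > 0" using zeta by simp
      have "A * zeta ^ k = E N / zeta ^ N * (zeta ^ N * zeta ^ j)" unfolding A_def k power_add ..
      also have "\<dots> = E N * zeta ^ j" using zN zeta by (simp add: field_simps)
      finally show ?thesis .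
    qed
    ultimately show ?thesis by simp
  qed
  have pP: "PP > 0" by (rule PP_pos)
  have bp: "beta > 0" and mp: "mu' > 0" using params by auto
  define Z where "Z = A / PP + 1"
  define V1 where "V1 = 2 * beta * A + 1"
  define V2 where "V2 = 2 * A / mu' + 1"
  have zn: "zeta ^ n \<ge> 0" for n using zeta by simp
  have bounds: "norm (xb - z (n + 2))^2 \<le> Z * zeta ^ n \<and>
                norm (yb - y n)^2 \<le> V1 * zeta ^ n \<and>
                norm (x n - x (n + 1))^2 \<le> V2 * zeta ^ n" if n: "n \<ge> N" for n
  proof (intro conjI)
    have En: "E n \<le> A * zeta ^ n" by (rule EA[OF n])
    have e2: "z (n + 2) = z (Suc (Suc n))" "x (n + 1) = x (Suc n)" by simp_all
    have t1: "PP * norm (z (Suc (Suc n)) - xb)^2 \<le> E n"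
      and t2: "norm (y n - yb)^2 / (2 * beta) \<le> E n"
      and t3: "mu' / 2 * norm (x (Suc n) - x n)^2 \<le> E n"
      unfolding E_def using pP bp mp by auto
    have nc: "norm (xb - z (Suc (Suc n))) = norm (z (Suc (Suc n)) - xb)"
      "norm (yb - y n) = norm (y n - yb)" "norm (x n - x (Suc n)) = norm (x (Suc n) - x n)"
      by (rule norm_minus_commute)+
    have "norm (z (Suc (Suc n)) - xb)^2 = (PP * norm (z (Suc (Suc n)) - xb)^2) / PP" using pP by simp
    also have "\<dots> \<le> E n / PP" by (rule divide_right_mono[OF t1]) (use pP in simp)
    also have "\<dots> \<le> (A * zeta ^ n) / PP" by (rule divide_right_mono[OF En]) (use pP in simp)
    also have "\<dots> \<le> Z * zeta ^ n"
    proof -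
      have "(A * zeta ^ n) / PP = (A / PP) * zeta ^ n" by simp
      also have "\<dots> \<le> Z * zeta ^ n" unfolding Z_def using zn[of n] by (intro mult_right_mono) auto
      finally show ?thesis .
    qed
    finally show "norm (xb - z (n + 2))^2 \<le> Z * zeta ^ n" unfolding e2 nc .
    have "norm (y n - yb)^2 = 2 * beta * (norm (y n - yb)^2 / (2 * beta))" using bp by simp
    also have "\<dots> \<le> 2 * beta * E n" using t2 bp by (intro mult_left_mono) auto
    also have "\<dots> \<le> 2 * beta * (A * zeta ^ n)" using En bp by (intro mult_left_mono) auto
    also have "\<dots> \<le> V1 * zeta ^ n" unfolding V1_def using zn[of n] by (simp add: algebra_simps)
    finally show "norm (yb - y n)^2 \<le> V1 * zeta ^ n" unfolding nc .
    have "norm (x (Suc n) - x n)^2 = 2 / mu' * (mu' / 2 * norm (x (Suc n) - x n)^2)" using mp by simp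
    also have "\<dots> \<le> 2 / mu' * E n" using t3 mp by (intro mult_left_mono) auto
    also have "\<dots> \<le> 2 / mu' * (A * zeta ^ n)" using En mp by (intro mult_left_mono) auto
    also have "\<dots> \<le> V2 * zeta ^ n" unfolding V2_def using zn[of n] by (simp add: algebra_simps)
    finally show "norm (x n - x (n + 1))^2 \<le> V2 * zeta ^ n" unfolding e2 nc .
  qed
  define M2 where "M2 = A / (zeta * (tmin * gam_h)) + 2 * beta * A"
  have tg: "tmin * gam_h > 0" using tmin_pos h_sc by simp
  have M20: "M2 \<ge> 0" unfolding M2_def using A0 zeta tg bp by simp
  have pairb: "norm ((x n, y n) - (xb, yb)) \<le> (sqrt M2 + 1) * sqrt zeta ^ n" if n: "n \<ge> Suc N" for n
  proof -
    obtain k where nk: "n = Suc k" and k: "k \<ge> N" using n by (metis Suc_le_D Suc_le_mono)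
    have "tmin * gam_h * norm (x n - xb)^2 \<le> A * zeta ^ k" using sc(2)[OF k] EA[OF k] nk by simp
    then have "norm (x n - xb)^2 \<le> A * zeta ^ k / (tmin * gam_h)" using tg
      by (simp add: pos_le_divide_eq mult.commute)
    also have "\<dots> = A / (zeta * (tmin * gam_h)) * zeta ^ n" unfolding nk using zeta by (simp add: field_simps)
    finally have xb': "norm (x n - xb)^2 \<le> A / (zeta * (tmin * gam_h)) * zeta ^ n" .
    have t2': "norm (y n - yb)^2 / (2 * beta) \<le> E n" unfolding E_def using pP bp mp by auto
    have "norm (y n - yb)^2 = 2 * beta * (norm (y n - yb)^2 / (2 * beta))" using bp by simp
    also have "\<dots> \<le> 2 * beta * E n" using t2' bp by (intro mult_left_mono) auto
    also have "\<dots> \<le> 2 * beta * (A * zeta ^ n)" using EA[of n] n bp by simp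
    finally have yb': "norm (y n - yb)^2 \<le> 2 * beta * A * zeta ^ n" by simp
    have "norm ((x n, y n) - (xb, yb)) = sqrt (norm (x n - xb)^2 + norm (y n - yb)^2)"
      by (simp add: norm_Pair)
    also have "\<dots> \<le> sqrt (M2 * zeta ^ n)" using xb' yb' unfolding M2_def
      by (intro real_sqrt_le_mono) (simp add: algebra_simps)
    also have "\<dots> = sqrt M2 * sqrt zeta ^ n" by (simp add: real_sqrt_mult real_sqrt_power)
    also have "\<dots> \<le> (sqrt M2 + 1) * sqrt zeta ^ n" using zeta by (intro mult_right_mono) auto
    finally show ?thesis .
  qed
  have RL: "R_linear_conv (\<lambda>n. (x n, y n)) (xb, yb)"
    unfolding R_linear_conv_def
  proof (intro exI conjI)
    show "sqrt M2 + 1 > 0" using M20 by (smt (verit) real_sqrt_ge_zero)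
    show "Q_linear_zero (\<lambda>n. sqrt zeta ^ n)"
      unfolding Q_linear_zero_def
    proof (intro conjI exI allI impI)
      show "(\<lambda>n. sqrt zeta ^ n) \<longlonglongrightarrow> 0" using zeta by (intro LIMSEQ_power_zero) simp
      show "0 < sqrt zeta" "sqrt zeta < 1" using zeta by auto
      fix n :: nat assume "n \<ge> 0"
      show "\<bar>sqrt zeta ^ Suc n\<bar> \<le> sqrt zeta * \<bar>sqrt zeta ^ n\<bar>" using zeta by simp
    qed
    show "\<forall>n\<ge>Suc N. norm ((x n, y n) - (xb, yb)) \<le> (sqrt M2 + 1) * sqrt zeta ^ n"
      using pairb by blast
  qed
  have "2 * beta * A \<ge> 0" using A0 bp by simp
  then have V1p: "V1 > 0" unfolding V1_def by linarith
  have "2 * A / mu' \<ge> 0" using A0 mp by simp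
  then have V2p: "V2 > 0" unfolding V2_def by linarith
  have "A / PP \<ge> 0" using A0 pP by simp
  then have Zp: "Z > 0" unfolding Z_def by linarith
  show ?thesis
    apply (rule exI[of _ V1], rule exI[of _ V2], rule exI[of _ Z], rule exI[of _ zeta], rule exI[of _ N])
    using bounds RL zeta V1p V2p Zp by blast
qed

end

theorem theorem4p2:
  fixes f :: "'x::euclidean_space \<Rightarrow> ereal" and g :: "'y::euclidean_space \<Rightarrow> ereal"
    and K :: "'x \<Rightarrow> 'y" and h :: "'x \<Rightarrow> real" and dh :: "'x \<Rightarrow> 'x"
    and Lbar gam_h gam_g beta psi mu mu' :: real
    and z x :: "nat \<Rightarrow> 'x" and w y :: "nat \<Rightarrow> 'y" and tau :: "nat \<Rightarrow> real"
    and xb :: 'x and yb :: 'y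
  assumes f_pcl: "proper_fun f" "convex_efun f" "lsc_efun f"
    and g_pcl: "proper_fun g" "convex_efun g" "lsc_efun g"
    and K_lin: "linear K"
    and h_conv: "convex_on UNIV h"
    and h_grad: "\<And>u. (h has_derivative (\<lambda>v. inner (dh u) v)) (at u)"
    and h_lip: "Lbar-lipschitz_on UNIV dh"
    and A1_sol: "\<exists>xs ys. is_saddle_point f h K g xs ys"
    and A1_ri: "(0::'y) \<in> rel_interior {a - b | a b. a \<in> K ` edom f \<and> b \<in> edom g}"
    and g_sc: "gam_g > 0" "strongly_convex_efun (fenchel_conj g) gam_g"
    and h_sc: "gam_h > 0" "strongly_convex_grad h dh gam_h"
    and alg: "is_pgrpda f dh K g beta psi mu mu' z x w y tau"
    and sol: "is_saddle_point f h K g xb yb"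
    and conv_x: "x \<longlonglongrightarrow> xb" and conv_y: "y \<longlonglongrightarrow> yb"
  shows "\<exists>V1 V2 Z zeta n4. V1 > 0 \<and> V2 > 0 \<and> Z > 0 \<and> 0 < zeta \<and> zeta < 1 \<and>
           (\<forall>n\<ge>n4. norm (xb - z (n + 2))^2 \<le> Z * zeta ^ n \<and>
                     norm (yb - y n)^2 \<le> V1 * zeta ^ n \<and>
                     norm (x n - x (n + 1))^2 \<le> V2 * zeta ^ n)
         \<and> R_linear_conv (\<lambda>n. (x n, y n)) (xb, yb)"
proof -
  interpret pg f g K h dh Lbar gam_h gam_g beta psi mu mu' z x w y tau xb yb
    by (rule pg.intro[OF f_pcl g_pcl K_lin h_lip g_sc h_sc alg sol])
  show ?thesis by (rule main_result)
qed

end
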